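(* Let $\mathcal H$ be an infinite-dimensional complex Hilbert space and let $\mathcal G_f(\mathcal H)$ be the set of those $t\in\mathcal V_f(\mathcal H)$ for which there exists $A\in\mathcal V(\mathcal H)$ with $D(A)=D(t)$ and $t(x,y)=(Ax,y)$ for all $x,y\in D(t)$. Then $(\mathcal G_f(\mathcal H);\oplus_{|\mathcal G_f(\mathcal H)},o)$ is a sub-generalized effect algebra of $(\mathcal V_f(\mathcal H);\oplus,o)$ and is isomorphic to the generalized effect algebra $(\mathcal V(\mathcal H);\oplus_{\mathcal D},O)$.
   Context: Bilinear forms $t$ on $\mathcal H$ are sesquilinear maps $D(t)\times D(t)\to\mathbb C$ on a dense linear subspace $D(t)$ (linear in the first argument); $t$ is positive if $t(x,x)\ge0$ on $D(t)$, bounded if $\sup\{t(x,x)\mid x\in D(t),\|x\|=1\}<\infty$. The sum $t+s$ has domain $D(t)\cap D(s)$. $o$ is the zero form on $\mathcal H$. $\mathcal V_f(\mathcal H)$ is the set of positive bilinear forms with dense domain such that $D(t)=\mathcal H$ whenever $t$ is bounded; $t\oplus s$ is defined iff $t$ or $s$ is bounded or $D(t)=D(s)$, and then $t\oplus s=t+s$. $\mathcal V(\mathcal H)$ is the set of densely defined linear operators $A:D(A)\to\mathcal H$ with $(Ax,x)\ge0$ for all $x\in D(A)$ and with $D(A)=\mathcal H$ whenever $A$ is bounded; for $A,B\in\mathcal V(\mathcal H)$, $A\oplus_{\mathcal D}B$ is defined iff $A$ or $B$ is bounded or $D(A)=D(B)$, and then $A\oplus_{\mathcal D}B=A+B$ (on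 $D(A)\cap D(B)$); $O$ is the zero operator. A generalized effect algebra is a structure $(E;\oplus,0)$ with a partial operation that is commutative and associative (when one side is defined), has $x\oplus0=x$, is cancellative, and satisfies $x\oplus y=0\Rightarrow x=y=0$. A subset $Q\subseteq E$ is a sub-generalized effect algebra if $0\in Q$ and whenever $x\oplus y=z$ in $E$ with two of $x,y,z$ in $Q$, all three are in $Q$. For $Q\subseteq E$, $x\oplus_{|Q}y$ is defined iff $x\oplus y$ is defined in $E$ and lies in $Q$, and then equals $x\oplus y$. *)

theory Defs
  imports "HOL-Analysis.Analysis"
begin

class scaleC = scaleR +
  fixes scaleC :: "complex \<Rightarrow> 'a \<Rightarrow> 'a" (infixr \<open>*\<^sub>C\<close> 75)
  assumes scaleR_scaleC: "scaleR r = scaleC (complex_of_real r)"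

class complex_vector = scaleC + ab_group_add +
  assumes scaleC_add_right: "a *\<^sub>C (x + y) = a *\<^sub>C x + a *\<^sub>C y"
    and scaleC_add_left: "(a + b) *\<^sub>C x = a *\<^sub>C x + b *\<^sub>C x"
    and scaleC_scaleC: "a *\<^sub>C (b *\<^sub>C x) = (a * b) *\<^sub>C x"
    and scaleC_one: "1 *\<^sub>C x = x"

class complex_normed_vector = complex_vector + real_normed_vector +
  assumes norm_scaleC: "norm (a *\<^sub>C x) = cmod a * norm x"

text \<open>Inner product, linear in the first argument (as in the paper).\<close>
class complex_inner = complex_normed_vector +
  fixes cinner :: "'a \<Rightarrow> 'a \<Rightarrow> complex"
  assumes cinner_commute: "cinner x y = cnj (cinner y x)"
    and cinner_add_left: "cinner (x + y) z = cinner x z + cinner y z"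
    and cinner_scaleC_left: "cinner (a *\<^sub>C x) y = a * cinner x y"
    and cinner_nonneg: "cinner x x \<in> \<real> \<and> 0 \<le> Re (cinner x x)"
    and cinner_eq_zero_iff: "cinner x x = 0 \<longleftrightarrow> x = 0"
    and norm_eq_sqrt_cinner: "norm x = sqrt (Re (cinner x x))"

class chilbert = complex_inner + complete_space

definition cspan :: "'a::complex_vector set \<Rightarrow> 'a set" where
  "cspan S = {(\<Sum>a\<in>T. c a *\<^sub>C a) | T c. finite T \<and> T \<subseteq> S}"

definition infinite_dimensional :: "'a::complex_vector itself \<Rightarrow> bool" where
  "infinite_dimensional _ \<longleftrightarrow> \<not> (\<exists>S::'a set. finite S \<and> cspan S = UNIV)"

definition csubspace :: "'a::complex_vector set \<Rightarrow> bool" where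
  "csubspace S \<longleftrightarrow> 0 \<in> S \<and> (\<forall>x\<in>S. \<forall>y\<in>S. x + y \<in> S) \<and> (\<forall>c. \<forall>x\<in>S. c *\<^sub>C x \<in> S)"

text \<open>A form is a pair (D(t), values); values are forced to be 0 outside D(t) x D(t),
  so that equality of forms is equality of domains and of values on the domain.\<close>
type_synonym 'a form = "'a set \<times> ('a \<Rightarrow> 'a \<Rightarrow> complex)"

definition is_form :: "'a::complex_normed_vector form \<Rightarrow> bool" where
  "is_form t \<longleftrightarrow> (let D = fst t; f = snd t in
     csubspace D \<and> closure D = UNIV \<and>
     (\<forall>x\<in>D. \<forall>y\<in>D. \<forall>z\<in>D. f (x + y) z = f x z + f y z \<and> f z (x + y) = f z x + f z y) \<and>
     (\<forall>c. \<forall>x\<in>D. \<forall>y\<in>D. f (c *\<^sub>C x) y = c * f x y \<and> f x (c *\<^sub>C y) = cnj c * f x y) \<and>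
     (\<forall>x y. x \<notin> D \<or> y \<notin> D \<longrightarrow> f x y = 0))"

definition form_positive :: "'a form \<Rightarrow> bool" where
  "form_positive t \<longleftrightarrow> (\<forall>x\<in>fst t. snd t x x \<in> \<real> \<and> 0 \<le> Re (snd t x x))"

definition form_bounded :: "'a::real_normed_vector form \<Rightarrow> bool" where
  "form_bounded t \<longleftrightarrow> (\<exists>C. \<forall>x\<in>fst t. norm x = 1 \<longrightarrow> cmod (snd t x x) \<le> C)"

definition form_add :: "'a form \<Rightarrow> 'a form \<Rightarrow> 'a form" where
  "form_add t s = (fst t \<inter> fst s,
     \<lambda>x y. if x \<in> fst t \<inter> fst s \<and> y \<in> fst t \<inter> fst s then snd t x y + snd s x y else 0)"

definition zero_form :: "'a form" where
  "zero_form = (UNIV, \<lambda>x y. 0)"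

definition Vf :: "'a::complex_normed_vector form set" where
  "Vf = {t. is_form t \<and> form_positive t \<and> (form_bounded t \<longrightarrow> fst t = UNIV)}"

definition oplus_f :: "'a::real_normed_vector form \<Rightarrow> 'a form \<Rightarrow> 'a form option" where
  "oplus_f t s = (if form_bounded t \<or> form_bounded s \<or> fst t = fst s
                  then Some (form_add t s) else None)"

text \<open>An operator is a pair (D(A), A) with A x = 0 outside D(A).\<close>
type_synonym 'a lop = "'a set \<times> ('a \<Rightarrow> 'a)"

definition is_op :: "'a::complex_normed_vector lop \<Rightarrow> bool" where
  "is_op A \<longleftrightarrow> (let D = fst A; f = snd A in
     csubspace D \<and> closure D = UNIV \<and>
     (\<forall>x\<in>D. \<forall>y\<in>D. f (x + y) = f x + f y) \<and>
     (\<forall>c. \<forall>x\<in>D. f (c *\<^sub>C x) = c *\<^sub>C f x) \<and>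
     (\<forall>x. x \<notin> D \<longrightarrow> f x = 0))"

definition op_bounded :: "'a::real_normed_vector lop \<Rightarrow> bool" where
  "op_bounded A \<longleftrightarrow> (\<exists>C. \<forall>x\<in>fst A. norm (snd A x) \<le> C * norm x)"

definition op_add :: "'a::ab_group_add lop \<Rightarrow> 'a lop \<Rightarrow> 'a lop" where
  "op_add A B = (fst A \<inter> fst B,
     \<lambda>x. if x \<in> fst A \<inter> fst B then snd A x + snd B x else 0)"

definition zero_op :: "'a::zero lop" where
  "zero_op = (UNIV, \<lambda>x. 0)"

definition V :: "'a::complex_inner lop set" where
  "V = {A. is_op A \<and> (\<forall>x\<in>fst A. cinner (snd A x) x \<in> \<real> \<and> 0 \<le> Re (cinner (snd A x) x))
          \<and> (op_bounded A \<longrightarrow> fst A = UNIV)}"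

definition oplus_D :: "'a::{real_normed_vector} lop \<Rightarrow> 'a lop \<Rightarrow> 'a lop option" where
  "oplus_D A B = (if op_bounded A \<or> op_bounded B \<or> fst A = fst B
                  then Some (op_add A B) else None)"

definition Gf :: "'a::complex_inner form set" where
  "Gf = {t \<in> Vf. \<exists>A\<in>V. fst A = fst t \<and>
          (\<forall>x\<in>fst t. \<forall>y\<in>fst t. snd t x y = cinner (snd A x) y)}"

definition gea :: "'b set \<Rightarrow> ('b \<Rightarrow> 'b \<Rightarrow> 'b option) \<Rightarrow> 'b \<Rightarrow> bool" where
  "gea E op z \<longleftrightarrow>
     z \<in> E \<and>
     (\<forall>x\<in>E. \<forall>y\<in>E. \<forall>w. op x y = Some w \<longrightarrow> w \<in> E) \<and>
     (\<forall>x\<in>E. \<forall>y\<in>E. op x y = op y x) \<and>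
     (\<forall>x\<in>E. \<forall>y\<in>E. \<forall>u\<in>E. Option.bind (op x y) (\<lambda>v. op v u) = Option.bind (op y u) (\<lambda>v. op x v)) \<and>
     (\<forall>x\<in>E. op x z = Some x) \<and>
     (\<forall>x\<in>E. \<forall>y\<in>E. \<forall>y'\<in>E. \<forall>w. op x y = Some w \<and> op x y' = Some w \<longrightarrow> y = y') \<and>
     (\<forall>x\<in>E. \<forall>y\<in>E. op x y = Some z \<longrightarrow> x = z \<and> y = z)"

definition sub_gea :: "'b set \<Rightarrow> 'b set \<Rightarrow> ('b \<Rightarrow> 'b \<Rightarrow> 'b option) \<Rightarrow> 'b \<Rightarrow> bool" where
  "sub_gea Q E op z \<longleftrightarrow> gea E op z \<and> Q \<subseteq> E \<and> z \<in> Q \<and>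
     (\<forall>x\<in>E. \<forall>y\<in>E. \<forall>w\<in>E. op x y = Some w \<longrightarrow>
        ((x \<in> Q \<and> y \<in> Q) \<or> (x \<in> Q \<and> w \<in> Q) \<or> (y \<in> Q \<and> w \<in> Q)) \<longrightarrow>
        x \<in> Q \<and> y \<in> Q \<and> w \<in> Q)"

definition restr_op :: "'b set \<Rightarrow> ('b \<Rightarrow> 'b \<Rightarrow> 'b option) \<Rightarrow> 'b \<Rightarrow> 'b \<Rightarrow> 'b option" where
  "restr_op Q op x y = (case op x y of Some w \<Rightarrow> if w \<in> Q then Some w else None | None \<Rightarrow> None)"

definition gea_iso :: "('b \<Rightarrow> 'c) \<Rightarrow> 'b set \<Rightarrow> ('b \<Rightarrow> 'b \<Rightarrow> 'b option) \<Rightarrow> 'b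
     \<Rightarrow> 'c set \<Rightarrow> ('c \<Rightarrow> 'c \<Rightarrow> 'c option) \<Rightarrow> 'c \<Rightarrow> bool" where
  "gea_iso \<phi> E opE zE F opF zF \<longleftrightarrow> bij_betw \<phi> E F \<and> \<phi> zE = zF \<and>
     (\<forall>x\<in>E. \<forall>y\<in>E. opF (\<phi> x) (\<phi> y) = map_option \<phi> (opE x y))"

definition gea_isomorphic :: "'b set \<Rightarrow> ('b \<Rightarrow> 'b \<Rightarrow> 'b option) \<Rightarrow> 'b
     \<Rightarrow> 'c set \<Rightarrow> ('c \<Rightarrow> 'c \<Rightarrow> 'c option) \<Rightarrow> 'c \<Rightarrow> bool" where
  "gea_isomorphic E opE zE F opF zF \<longleftrightarrow> (\<exists>\<phi>. gea_iso \<phi> E opE zE F opF zF)"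

end

theory Submission
  imports Defs
begin


lemma scaleC_of_real: "complex_of_real r *\<^sub>C (x::'a::complex_normed_vector) = r *\<^sub>R x"
  by (simp add: scaleR_scaleC)

lemma scaleC_minus1: "(-1) *\<^sub>C (x::'a::complex_normed_vector) = - x"
  using scaleC_of_real[of "-1" x] by simp

lemma scaleC_zero_left[simp]: "0 *\<^sub>C (x::'a::complex_normed_vector) = 0"
  using scaleC_of_real[of 0 x] by simp

lemma scaleC_zero_right[simp]: "c *\<^sub>C (0::'a::complex_normed_vector) = 0"
  using scaleC_add_right[of c 0 0] by simp

lemma scaleC_minus_right: "c *\<^sub>C (- x::'a::complex_normed_vector) = - (c *\<^sub>C x)"
proof -
  have "c *\<^sub>C (- x) = c *\<^sub>C ((-1) *\<^sub>C x)" by (simp add: scaleC_minus1)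
  also have "\<dots> = (-1) *\<^sub>C (c *\<^sub>C x)" by (simp add: scaleC_scaleC mult.commute)
  also have "\<dots> = - (c *\<^sub>C x)" by (simp add: scaleC_minus1)
  finally show ?thesis .
qed

lemma scaleC_diff_right: "c *\<^sub>C (x - y::'a::complex_normed_vector) = c *\<^sub>C x - c *\<^sub>C y"
  unfolding diff_conv_add_uminus by (simp only: scaleC_add_right scaleC_minus_right)

lemma csub_zero: "csubspace D \<Longrightarrow> 0 \<in> D" by (simp add: csubspace_def)
lemma csub_add: "csubspace D \<Longrightarrow> x \<in> D \<Longrightarrow> y \<in> D \<Longrightarrow> x + y \<in> D" by (simp add: csubspace_def)
lemma csub_scale: "csubspace D \<Longrightarrow> x \<in> D \<Longrightarrow> c *\<^sub>C x \<in> D" by (simp add: csubspace_def)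
lemma csub_minus: "csubspace D \<Longrightarrow> x \<in> D \<Longrightarrow> - (x::'a::complex_normed_vector) \<in> D"
  using csub_scale[of D x "-1"] by (simp add: scaleC_minus1)
lemma csub_diff: "csubspace D \<Longrightarrow> x \<in> D \<Longrightarrow> y \<in> D \<Longrightarrow> (x::'a::complex_normed_vector) - y \<in> D"
  using csub_add[of D x "- y"] csub_minus[of D y] by simp

lemma csub_UNIV: "csubspace UNIV" by (simp add: csubspace_def)

lemma csub_Int: "csubspace A \<Longrightarrow> csubspace B \<Longrightarrow> csubspace (A \<inter> B)"
  by (simp add: csubspace_def)

lemma cinner_add_right: "cinner x (y + z) = cinner x y + cinner x z"
proof -
  have "cinner x (y + z) = cnj (cinner (y + z) x)" by (rule cinner_commute)
  also have "\<dots> = cnj (cinner y x) + cnj (cinner z x)" by (simp add: cinner_add_left)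
  also have "\<dots> = cinner x y + cinner x z" by (intro arg_cong2[where f="(+)"] cinner_commute[symmetric])
  finally show ?thesis .
qed
lemma cinner_scaleC_right: "cinner x (c *\<^sub>C y) = cnj c * cinner x y"
proof -
  have "cinner x (c *\<^sub>C y) = cnj (cinner (c *\<^sub>C y) x)" by (rule cinner_commute)
  also have "\<dots> = cnj c * cnj (cinner y x)" by (simp add: cinner_scaleC_left)
  also have "\<dots> = cnj c * cinner x y" by (intro arg_cong2[where f="(*)"] refl cinner_commute[symmetric])
  finally show ?thesis .
qed
lemma cinner_zero_left[simp]: "cinner 0 y = 0"
  using cinner_add_left[of 0 0 y] by simp
lemma cinner_zero_right[simp]: "cinner x 0 = 0"
  using cinner_add_right[of x 0 0] by simp
lemma cinner_minus_left: "cinner (- x) y = - cinner x y" (is "?rhs = _")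
proof -
  have "cinner x y + cinner (-x) y = 0" using cinner_add_left[of x "-x" y] by simp
  then have "- cinner x y = ?rhs" by (simp only: neg_eq_iff_add_eq_0)
  then show ?thesis by (rule sym)
qed
lemma cinner_minus_right: "cinner x (- y) = - cinner x y" (is "?rhs = _")
proof -
  have "cinner x y + cinner x (-y) = 0" using cinner_add_right[of x y "-y"] by simp
  then have "- cinner x y = ?rhs" by (simp only: neg_eq_iff_add_eq_0)
  then show ?thesis by (rule sym)
qed
lemma cinner_diff_left: "cinner (x - y) z = cinner x z - cinner y z"
  unfolding diff_conv_add_uminus by (simp only: cinner_add_left cinner_minus_left)
lemma cinner_diff_right: "cinner x (y - z) = cinner x y - cinner x z"
  unfolding diff_conv_add_uminus by (simp only: cinner_add_right cinner_minus_right)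
lemma cinner_self: "cinner x x = complex_of_real ((norm x)\<^sup>2)"
proof -
  have r: "cinner x x \<in> \<real>" "0 \<le> Re (cinner x x)" using cinner_nonneg by auto
  have "(norm x)\<^sup>2 = Re (cinner x x)" using r by (simp add: norm_eq_sqrt_cinner)
  then show ?thesis using r by (simp add: complex_eq_iff complex_is_Real_iff)
qed
lemma cinner_scaleR_left: "cinner (r *\<^sub>R x) y = complex_of_real r * cinner x y"
  by (simp add: scaleR_scaleC cinner_scaleC_left)
lemma cinner_scaleR_right: "cinner x (r *\<^sub>R y) = complex_of_real r * cinner x y"
  by (simp add: scaleR_scaleC cinner_scaleC_right)



definition psesq :: "'a::complex_normed_vector set \<Rightarrow> ('a \<Rightarrow> 'a \<Rightarrow> complex) \<Rightarrow> bool" where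
  "psesq D f \<longleftrightarrow> csubspace D \<and>
     (\<forall>x\<in>D. \<forall>y\<in>D. \<forall>z\<in>D. f (x + y) z = f x z + f y z \<and> f z (x + y) = f z x + f z y) \<and>
     (\<forall>c. \<forall>x\<in>D. \<forall>y\<in>D. f (c *\<^sub>C x) y = c * f x y \<and> f x (c *\<^sub>C y) = cnj c * f x y) \<and>
     (\<forall>x\<in>D. f x x \<in> \<real> \<and> 0 \<le> Re (f x x))"

lemma psesq_herm:
  assumes P: "psesq D f" and x: "x \<in> D" and y: "y \<in> D"
  shows "f y x = cnj (f x y)"
proof -
  have sub: "csubspace D" using P by (simp add: psesq_def)
  have iy: "\<i> *\<^sub>C y \<in> D" using sub y by (rule csub_scale)
  have add: "\<And>u v w. u \<in> D \<Longrightarrow> v \<in> D \<Longrightarrow> w \<in> D \<Longrightarrow> f (u + v) w = f u w + f v w \<and> f w (u + v) = f w u + f w v"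
    using P by (simp add: psesq_def)
  have sc: "\<And>c u v. u \<in> D \<Longrightarrow> v \<in> D \<Longrightarrow> f (c *\<^sub>C u) v = c * f u v \<and> f u (c *\<^sub>C v) = cnj c * f u v"
    using P by (simp add: psesq_def)
  have re: "\<And>u. u \<in> D \<Longrightarrow> Im (f u u) = 0"
    using P by (simp add: psesq_def complex_is_Real_iff)
  have xy: "x + y \<in> D" using sub x y by (rule csub_add)
  have xiy: "x + \<i> *\<^sub>C y \<in> D" using sub x iy by (rule csub_add)
  have e1: "f (x + y) (x + y) = f x x + f x y + f y x + f y y"
    using add[OF x y xy] add[OF x y x] add[OF x y y] by simp
  have e2: "f (x + \<i> *\<^sub>C y) (x + \<i> *\<^sub>C y) = f x x - \<i> * f x y + \<i> * f y x + f y y"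
    using add[OF x iy xiy] add[OF x iy x] add[OF x iy iy] sc[OF x y, of \<i>] sc[OF y x, of \<i>]
      sc[OF y iy, of \<i>] sc[OF y y, of \<i>] by (simp add: algebra_simps)
  have i1: "Im (f x y) + Im (f y x) = 0" using e1 re[OF xy] re[OF x] re[OF y] by simp
  have i2: "Re (f y x) - Re (f x y) = 0" using e2 re[OF xiy] re[OF x] re[OF y] by simp
  show ?thesis using i1 i2 by (simp add: complex_eq_iff)
qed

lemma quad_disc:
  fixes a B c :: real
  assumes "0 \<le> a" "0 \<le> c" "0 \<le> B" and q: "\<And>t. 0 \<le> a - 2 * t * B + t\<^sup>2 * B * c"
  shows "B \<le> a * c"
proof (cases "B = 0")
  case True then show ?thesis using assms by simp
next
  case False
  then have Bp: "B > 0" using assms by simp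
  show ?thesis
  proof (cases "c = 0")
    case True
    have "0 \<le> a - 2 * ((a + 1) / (2 * B)) * B" using q[of "(a + 1) / (2 * B)"] True by simp
    also have "\<dots> = -1" using Bp by (simp add: field_simps)
    finally show ?thesis by simp
  next
    case False
    then have cp: "c > 0" using assms by simp
    have "0 \<le> a - 2 * (1 / c) * B + (1 / c)\<^sup>2 * B * c" by (rule q)
    also have "\<dots> = (a * c - B) / c" using cp by (simp add: field_simps power2_eq_square)
    finally show ?thesis using cp by (simp add: divide_nonneg_pos zero_le_divide_iff)
  qed
qed

lemma psesq_CS:
  assumes P: "psesq D f" and x: "x \<in> D" and y: "y \<in> D"
  shows "(cmod (f x y))\<^sup>2 \<le> Re (f x x) * Re (f y y)"
proof -
  have sub: "csubspace D" using P by (simp add: psesq_def)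
  have add: "\<And>u v w. u \<in> D \<Longrightarrow> v \<in> D \<Longrightarrow> w \<in> D \<Longrightarrow> f (u + v) w = f u w + f v w \<and> f w (u + v) = f w u + f w v"
    using P by (simp add: psesq_def)
  have sc: "\<And>c u v. u \<in> D \<Longrightarrow> v \<in> D \<Longrightarrow> f (c *\<^sub>C u) v = c * f u v \<and> f u (c *\<^sub>C v) = cnj c * f u v"
    using P by (simp add: psesq_def)
  have pos: "\<And>u. u \<in> D \<Longrightarrow> Im (f u u) = 0 \<and> 0 \<le> Re (f u u)"
    using P by (simp add: psesq_def complex_is_Real_iff)
  define b where "b = f x y"
  define a where "a = Re (f x x)"
  define c where "c = Re (f y y)"
  have fxx: "f x x = complex_of_real a" using pos[OF x] by (simp add: a_def complex_eq_iff)
  have fyy: "f y y = complex_of_real c" using pos[OF y] by (simp add: c_def complex_eq_iff)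
  have fyx: "f y x = cnj b" unfolding b_def by (rule psesq_herm[OF P x y])
  have q: "0 \<le> a - 2 * t * (cmod b)\<^sup>2 + t\<^sup>2 * (cmod b)\<^sup>2 * c" for t
  proof -
    define l where "l = - (complex_of_real t * b)"
    have ly: "l *\<^sub>C y \<in> D" using sub y by (rule csub_scale)
    have xly: "x + l *\<^sub>C y \<in> D" using sub x ly by (rule csub_add)
    have e: "f (x + l *\<^sub>C y) (x + l *\<^sub>C y) = f x x + cnj l * f x y + l * f y x + l * cnj l * f y y"
      using add[OF x ly xly] add[OF x ly x] add[OF x ly ly] sc[OF x y, of l] sc[OF y x, of l]
        sc[OF y ly, of l] sc[OF y y, of l] by (simp add: algebra_simps)
    have "Re (f x x + cnj l * f x y + l * f y x + l * cnj l * f y y)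
        = a - 2 * t * (cmod b)\<^sup>2 + t\<^sup>2 * (cmod b)\<^sup>2 * c"
      unfolding fxx fyy fyx l_def b_def[symmetric] cmod_power2
      by (simp add: algebra_simps power2_eq_square)
    then show ?thesis using pos[OF xly] e by simp
  qed
  have "(cmod b)\<^sup>2 \<le> a * c"
    by (rule quad_disc) (use pos[OF x] pos[OF y] q in \<open>auto simp: a_def c_def\<close>)
  then show ?thesis by (simp add: a_def b_def c_def)
qed

lemma psesq_bound:
  assumes P: "psesq D f" and C: "0 \<le> C" and b: "\<And>x. x \<in> D \<Longrightarrow> Re (f x x) \<le> C * (norm x)\<^sup>2"
    and x: "x \<in> D" and y: "y \<in> D"
  shows "cmod (f x y) \<le> C * norm x * norm y"
proof -
  have pos: "\<And>u. u \<in> D \<Longrightarrow> 0 \<le> Re (f u u)"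
    using P by (simp add: psesq_def)
  have "(cmod (f x y))\<^sup>2 \<le> Re (f x x) * Re (f y y)" by (rule psesq_CS[OF P x y])
  also have "\<dots> \<le> (C * (norm x)\<^sup>2) * (C * (norm y)\<^sup>2)"
    by (rule mult_mono) (use b[OF x] b[OF y] pos[OF x] pos[OF y] C in auto)
  also have "\<dots> = (C * norm x * norm y)\<^sup>2" by (simp add: power2_eq_square)
  finally show ?thesis by (rule power2_le_imp_le) (use C in simp)
qed

lemma psesq_cinner: "psesq (UNIV::'a::complex_inner set) cinner"
  unfolding psesq_def
  by (simp add: csub_UNIV cinner_add_left cinner_add_right cinner_scaleC_left cinner_scaleC_right cinner_nonneg)

lemma cinner_CS: "cmod (cinner x y) \<le> norm x * norm (y::'a::complex_inner)"
  using psesq_bound[OF psesq_cinner, of 1 x y] by (simp add: cinner_self)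



lemma dense_approx:
  assumes "closure D = UNIV" "0 < e"
  shows "\<exists>w\<in>D. norm (v - w) < e"
proof -
  have "v \<in> closure D" using assms by simp
  then obtain w where "w \<in> D" "dist w v < e" using assms(2) closure_approachable by blast
  then show ?thesis by (metis dist_norm norm_minus_commute)
qed

lemma density_bound:
  fixes z :: "'a::complex_inner"
  assumes cl: "closure D = UNIV" and M: "0 \<le> M" and hb: "\<And>b. b \<in> D \<Longrightarrow> cmod (cinner z b) \<le> M * norm b"
  shows "norm z \<le> M"
proof -
  have key: "(norm z)\<^sup>2 \<le> M * norm z + e" if e: "0 < e" for e
  proof -
    define d where "d = e / (M + norm z + 1)"
    have dp: "0 < d" using e M by (simp add: d_def add_nonneg_pos)
    obtain b where b: "b \<in> D" "norm (z - b) < d" using dense_approx[OF cl dp] by blast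
    have "(norm z)\<^sup>2 = cmod (cinner z z)" by (simp only: cinner_self norm_of_real) simp
    also have "cinner z z = cinner z b + cinner z (z - b)" by (simp add: cinner_diff_right)
    also have "cmod \<dots> \<le> cmod (cinner z b) + cmod (cinner z (z - b))" by (rule norm_triangle_ineq)
    also have "\<dots> \<le> M * norm b + norm z * norm (z - b)"
      using hb[OF b(1)] cinner_CS[of z "z - b"] by linarith
    also have "norm b \<le> norm z + norm (z - b)"
      using norm_triangle_ineq4[of z "z - b"] by simp
    then have "M * norm b \<le> M * (norm z + norm (z - b))" using M by (rule mult_left_mono)
    then have "M * norm b + norm z * norm (z - b) \<le> M * norm z + (M + norm z) * norm (z - b)"
      by (simp add: algebra_simps)
    also have "(M + norm z) * norm (z - b) \<le> (M + norm z + 1) * d"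
      by (rule mult_mono) (use b M in auto)
    also have "(M + norm z + 1) * d = e"
    proof -
      have "M + norm z + 1 \<noteq> 0" using M norm_ge_zero[of z] by linarith
      then show ?thesis by (simp add: d_def)
    qed
    finally show ?thesis by simp
  qed
  have sq: "(norm z)\<^sup>2 \<le> M * norm z" by (rule field_le_epsilon) (rule key)
  show ?thesis
  proof (cases "norm z = 0")
    case True then show ?thesis using M by simp
  next
    case False
    then have "0 < norm z" by simp
    then show ?thesis using sq by (simp add: power2_eq_square)
  qed
qed

lemma density_zero:
  fixes z :: "'a::complex_inner"
  assumes cl: "closure D = UNIV" and hb: "\<And>b. b \<in> D \<Longrightarrow> cinner z b = 0"
  shows "z = 0"
  using density_bound[OF cl order_refl, of z] hb by simp

lemma op_bound_from_form:
  fixes A :: "'a::complex_inner \<Rightarrow> 'a"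
  assumes cl: "closure D = UNIV" and P: "psesq D (\<lambda>x y. cinner (A x) y)" and C: "0 \<le> C"
    and b: "\<And>x. x \<in> D \<Longrightarrow> Re (cinner (A x) x) \<le> C * (norm x)\<^sup>2" and x: "x \<in> D"
  shows "norm (A x) \<le> C * norm x"
proof (rule density_bound[OF cl])
  show "0 \<le> C * norm x" using C by simp
  fix y assume y: "y \<in> D"
  show "cmod (cinner (A x) y) \<le> C * norm x * norm y"
    using psesq_bound[OF P C, of x y] b x y by simp
qed

lemma psesq_zero_left:
  assumes P: "psesq D f" and y: "y \<in> D" shows "f 0 y = 0"
proof -
  have z: "(0::'a) \<in> D" using P by (simp add: psesq_def csub_zero)
  have "f (0 *\<^sub>C 0) y = 0 * f 0 y" using P z y unfolding psesq_def by blast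
  then show ?thesis by simp
qed

lemma fb_to_quad:
  assumes P: "psesq D f" and fb: "form_bounded (D, f)"
  shows "\<exists>C\<ge>0. \<forall>x\<in>D. Re (f x x) \<le> C * (norm x)\<^sup>2"
proof -
  obtain C where C: "\<And>x. x \<in> D \<Longrightarrow> norm x = 1 \<Longrightarrow> cmod (f x x) \<le> C"
    using fb by (auto simp: form_bounded_def)
  have sub: "csubspace D" using P by (simp add: psesq_def)
  have sc: "\<And>c u v. u \<in> D \<Longrightarrow> v \<in> D \<Longrightarrow> f (c *\<^sub>C u) v = c * f u v \<and> f u (c *\<^sub>C v) = cnj c * f u v"
    using P by (simp add: psesq_def)
  have "Re (f x x) \<le> max C 0 * (norm x)\<^sup>2" if x: "x \<in> D" for x
  proof (cases "x = 0")
    case True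
    then show ?thesis using psesq_zero_left[OF P x] by simp
  next
    case False
    define n where "n = norm x"
    have np: "0 < n" using False by (simp add: n_def)
    define u where "u = complex_of_real (1 / n) *\<^sub>C x"
    have u: "u \<in> D" unfolding u_def using sub x by (rule csub_scale)
    have nu: "norm u = 1" unfolding u_def norm_scaleC norm_of_real using np by (simp add: n_def)
    have "f u u = complex_of_real (1 / n) * cnj (complex_of_real (1 / n)) * f x x"
      unfolding u_def using sc[OF x u] sc[OF x x] by (simp add: u_def)
    then have fu: "f u u = complex_of_real (1 / n\<^sup>2) * f x x" by (simp add: power2_eq_square)
    have "Re (f u u) \<le> C" using C[OF u nu] complex_Re_le_cmod order_trans by blast
    then have "Re (f x x) / n\<^sup>2 \<le> C" using fu by simp
    then have "Re (f x x) \<le> C * n\<^sup>2" using np by (simp add: divide_le_eq)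
    also have "\<dots> \<le> max C 0 * n\<^sup>2" by (simp add: mult_right_mono)
    finally show ?thesis by (simp add: n_def)
  qed
  then show ?thesis by (intro exI[of _ "max C 0"]) auto
qed

lemma quad_to_fb:
  assumes P: "psesq D f" and b: "\<And>x. x \<in> D \<Longrightarrow> Re (f x x) \<le> C * (norm x)\<^sup>2"
  shows "form_bounded (D, f)"
proof -
  have "cmod (f x x) \<le> C" if "x \<in> D" "norm x = 1" for x
  proof -
    have "f x x \<in> \<real>" "0 \<le> Re (f x x)" using P that by (auto simp: psesq_def)
    then have "cmod (f x x) = Re (f x x)" by (simp add: complex_is_Real_iff cmod_eq_Re)
    then show ?thesis using b[OF that(1)] that(2) by simp
  qed
  then show ?thesis unfolding form_bounded_def by auto
qed

lemma form_bounded_iff_quad: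
  assumes P: "psesq D f"
  shows "form_bounded (D, f) \<longleftrightarrow> (\<exists>C\<ge>0. \<forall>x\<in>D. Re (f x x) \<le> C * (norm x)\<^sup>2)"
  using fb_to_quad[OF P] quad_to_fb[OF P] by blast

lemma op_bounded_quad:
  fixes A :: "'a::complex_inner lop"
  assumes "op_bounded A"
  shows "\<exists>C\<ge>0. \<forall>x\<in>fst A. Re (cinner (snd A x) x) \<le> C * (norm x)\<^sup>2"
proof -
  obtain C where C: "\<And>x. x \<in> fst A \<Longrightarrow> norm (snd A x) \<le> C * norm x"
    using assms by (auto simp: op_bounded_def)
  have "Re (cinner (snd A x) x) \<le> max C 0 * (norm x)\<^sup>2" if x: "x \<in> fst A" for x
  proof -
    have "Re (cinner (snd A x) x) \<le> cmod (cinner (snd A x) x)" by (rule complex_Re_le_cmod)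
    also have "\<dots> \<le> norm (snd A x) * norm x" by (rule cinner_CS)
    also have "\<dots> \<le> (max C 0 * norm x) * norm x"
    proof (rule mult_right_mono)
      have "C * norm x \<le> max C 0 * norm x" by (rule mult_right_mono) auto
      then show "norm (snd A x) \<le> max C 0 * norm x" using C[OF x] by linarith
    qed simp
    finally show ?thesis by (simp add: power2_eq_square)
  qed
  then show ?thesis by (intro exI[of _ "max C 0"]) auto
qed



lemma small_zero:
  fixes z :: "'b::real_normed_vector"
  assumes cl: "closure D = UNIV" and M: "0 \<le> M" and h: "\<And>w. w \<in> D \<Longrightarrow> norm z \<le> M * norm (v - w)"
  shows "z = 0"
proof -
  have "norm z \<le> 0 + e" if e: "0 < e" for e
  proof -
    have d: "0 < e / (M + 1)" using e M by simp
    obtain w where w: "w \<in> D" "norm (v - w) < e / (M + 1)" using dense_approx[OF cl d] by blast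
    have "norm z \<le> M * norm (v - w)" by (rule h[OF w(1)])
    also have "\<dots> \<le> M * (e / (M + 1))" using w(2) M by (intro mult_left_mono) auto
    also have "\<dots> \<le> e" using M e by (simp add: field_simps)
    finally show ?thesis by simp
  qed
  then have "norm z \<le> 0" by (rule field_le_epsilon)
  then show ?thesis by simp
qed

lemma psesq_add_left: "psesq D f \<Longrightarrow> x \<in> D \<Longrightarrow> y \<in> D \<Longrightarrow> z \<in> D \<Longrightarrow> f (x + y) z = f x z + f y z"
  by (simp add: psesq_def)
lemma psesq_add_right: "psesq D f \<Longrightarrow> x \<in> D \<Longrightarrow> y \<in> D \<Longrightarrow> z \<in> D \<Longrightarrow> f z (x + y) = f z x + f z y"
  by (simp add: psesq_def)
lemma psesq_sub: "psesq D f \<Longrightarrow> csubspace D" by (simp add: psesq_def)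

lemma psesq_diff_left:
  assumes P: "psesq D f" and x: "x \<in> D" and y: "y \<in> D" and z: "z \<in> D"
  shows "f (x - y) z = f x z - f y z"
proof -
  have xy: "x - y \<in> D" using psesq_sub[OF P] x y by (rule csub_diff)
  have "f x z = f ((x - y) + y) z" by simp
  also have "\<dots> = f (x - y) z + f y z" by (rule psesq_add_left[OF P xy y z])
  finally show ?thesis by simp
qed

lemma psesq_diff_right:
  assumes P: "psesq D f" and x: "x \<in> D" and y: "y \<in> D" and z: "z \<in> D"
  shows "f z (x - y) = f z x - f z y"
proof -
  have xy: "x - y \<in> D" using psesq_sub[OF P] x y by (rule csub_diff)
  have "f z x = f z ((x - y) + y)" by simp
  also have "\<dots> = f z (x - y) + f z y" by (rule psesq_add_right[OF P xy y z])
  finally show ?thesis by simp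
qed

lemma gen_assoc:
  fixes op :: "'b \<Rightarrow> 'b \<Rightarrow> 'b option"
  assumes opdef: "\<And>a b. op a b = (if bnd a \<or> bnd b \<or> dm a = dm b then Some (add a b) else None)"
    and E: "x \<in> E" "y \<in> E" "u \<in> E"
    and dmadd: "\<And>a b. dm (add a b) = dm a \<inter> dm b"
    and bU: "\<And>a. a \<in> E \<Longrightarrow> bnd a \<Longrightarrow> dm a = UNIV"
    and badd: "\<And>a b. a \<in> E \<Longrightarrow> b \<in> E \<Longrightarrow> bnd a \<or> bnd b \<or> dm a = dm b \<Longrightarrow> bnd (add a b) = (bnd a \<and> bnd b)"
    and assoc: "add (add x y) u = add x (add y u)"
  shows "Option.bind (op x y) (\<lambda>v. op v u) = Option.bind (op y u) (\<lambda>v. op x v)"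
proof -
  have bx: "bnd x \<Longrightarrow> dm x = UNIV" and by': "bnd y \<Longrightarrow> dm y = UNIV" and bu: "bnd u \<Longrightarrow> dm u = UNIV"
    using bU E by auto
  have b1: "bnd x \<or> bnd y \<or> dm x = dm y \<Longrightarrow> bnd (add x y) = (bnd x \<and> bnd y)"
    using badd E by auto
  have b2: "bnd y \<or> bnd u \<or> dm y = dm u \<Longrightarrow> bnd (add y u) = (bnd y \<and> bnd u)"
    using badd E by auto
  show ?thesis
    unfolding opdef
    using bx by' bu b1 b2 assoc dmadd[of x y] dmadd[of y u]
    by (cases "bnd x"; cases "bnd y"; cases "bnd u"; auto)
qed



lemma Vf_iff:
  "t \<in> Vf \<longleftrightarrow> psesq (fst t) (snd t) \<and> closure (fst t) = UNIV \<and>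
     (\<forall>x y. x \<notin> fst t \<or> y \<notin> fst t \<longrightarrow> snd t x y = 0) \<and> (form_bounded t \<longrightarrow> fst t = UNIV)"
  unfolding Vf_def is_form_def form_positive_def psesq_def Let_def by auto

lemma Vf_psesq: "t \<in> Vf \<Longrightarrow> psesq (fst t) (snd t)" by (simp add: Vf_iff)
lemma Vf_cl: "t \<in> Vf \<Longrightarrow> closure (fst t) = UNIV" by (simp add: Vf_iff)
lemma Vf_out: "t \<in> Vf \<Longrightarrow> x \<notin> fst t \<or> y \<notin> fst t \<Longrightarrow> snd t x y = 0" by (simp add: Vf_iff)
lemma Vf_bU: "t \<in> Vf \<Longrightarrow> form_bounded t \<Longrightarrow> fst t = UNIV" by (simp add: Vf_iff)

lemma Vf_fb_iff:
  assumes "t \<in> Vf"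
  shows "form_bounded t \<longleftrightarrow> (\<exists>C\<ge>0. \<forall>x\<in>fst t. Re (snd t x x) \<le> C * (norm x)\<^sup>2)"
  using form_bounded_iff_quad[OF Vf_psesq[OF assms]] by simp

lemma fa_fst[simp]: "fst (form_add t s) = fst t \<inter> fst s" by (simp add: form_add_def)
lemma fa_snd: "x \<in> fst t \<inter> fst s \<Longrightarrow> y \<in> fst t \<inter> fst s \<Longrightarrow> snd (form_add t s) x y = snd t x y + snd s x y"
  by (simp add: form_add_def)

lemma okf_dom:
  assumes "t \<in> Vf" "s \<in> Vf" "form_bounded t \<or> form_bounded s \<or> fst t = fst s"
  shows "fst t \<inter> fst s = fst t \<or> fst t \<inter> fst s = fst s"
  using assms Vf_bU[OF assms(1)] Vf_bU[OF assms(2)] by auto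

lemma Vf_add_psesq:
  assumes t: "t \<in> Vf" and s: "s \<in> Vf"
  shows "psesq (fst t \<inter> fst s) (snd (form_add t s))"
proof -
  have Pt: "psesq (fst t) (snd t)" and Ps: "psesq (fst s) (snd s)" using t s by (auto intro: Vf_psesq)
  have st: "csubspace (fst t)" and ss: "csubspace (fst s)" using Pt Ps by (auto simp: psesq_def)
  show ?thesis
    unfolding psesq_def
  proof (intro conjI ballI allI)
    show "csubspace (fst t \<inter> fst s)" using st ss by (rule csub_Int)
  next
    fix x y z assume x: "x \<in> fst t \<inter> fst s" and y: "y \<in> fst t \<inter> fst s" and z: "z \<in> fst t \<inter> fst s"
    have xy: "x + y \<in> fst t \<inter> fst s" using x y st ss by (auto intro: csub_add)
    show "snd (form_add t s) (x + y) z = snd (form_add t s) x z + snd (form_add t s) y z"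
      using x y z xy Pt Ps by (simp add: fa_snd psesq_def)
    show "snd (form_add t s) z (x + y) = snd (form_add t s) z x + snd (form_add t s) z y"
      using x y z xy Pt Ps by (simp add: fa_snd psesq_def)
  next
    fix c x y assume x: "x \<in> fst t \<inter> fst s" and y: "y \<in> fst t \<inter> fst s"
    have cx: "c *\<^sub>C x \<in> fst t \<inter> fst s" "c *\<^sub>C y \<in> fst t \<inter> fst s" using x y st ss by (auto intro: csub_scale)
    show "snd (form_add t s) (c *\<^sub>C x) y = c * snd (form_add t s) x y"
      using x y cx Pt Ps by (simp add: fa_snd psesq_def distrib_left)
    show "snd (form_add t s) x (c *\<^sub>C y) = cnj c * snd (form_add t s) x y"
      using x y cx Pt Ps by (simp add: fa_snd psesq_def distrib_left)
  next
    fix x assume x: "x \<in> fst t \<inter> fst s"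
    show "snd (form_add t s) x x \<in> \<real>" "0 \<le> Re (snd (form_add t s) x x)"
      using x Pt Ps by (auto simp: fa_snd psesq_def)
  qed
qed

lemma Vf_add_bnd:
  assumes t: "t \<in> Vf" and s: "s \<in> Vf" and ok: "form_bounded t \<or> form_bounded s \<or> fst t = fst s"
  shows "form_bounded (form_add t s) \<longleftrightarrow> form_bounded t \<and> form_bounded s"
proof -
  have Pa: "psesq (fst t \<inter> fst s) (snd (form_add t s))" by (rule Vf_add_psesq[OF t s])
  have fbiff: "form_bounded (form_add t s) \<longleftrightarrow> (\<exists>C\<ge>0. \<forall>x\<in>fst t \<inter> fst s. Re (snd (form_add t s) x x) \<le> C * (norm x)\<^sup>2)"
  proof -
    have e: "form_add t s = (fst t \<inter> fst s, snd (form_add t s))" by (simp add: form_add_def)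
    show ?thesis by (subst e) (rule form_bounded_iff_quad[OF Pa])
  qed
  have post: "\<And>x. x \<in> fst t \<Longrightarrow> 0 \<le> Re (snd t x x)" using Vf_psesq[OF t] by (simp add: psesq_def)
  have poss: "\<And>x. x \<in> fst s \<Longrightarrow> 0 \<le> Re (snd s x x)" using Vf_psesq[OF s] by (simp add: psesq_def)
  show ?thesis
  proof
    assume "form_bounded (form_add t s)"
    then obtain C where C: "C \<ge> 0" "\<And>x. x \<in> fst t \<inter> fst s \<Longrightarrow> Re (snd (form_add t s) x x) \<le> C * (norm x)\<^sup>2"
      using fbiff by auto
    have Ct: "Re (snd t x x) \<le> C * (norm x)\<^sup>2" if "x \<in> fst t \<inter> fst s" for x
      using C(2)[OF that] poss[of x] that by (simp add: fa_snd)
    have Cs: "Re (snd s x x) \<le> C * (norm x)\<^sup>2" if "x \<in> fst t \<inter> fst s" for x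
      using C(2)[OF that] post[of x] that by (simp add: fa_snd)
    have "form_bounded t"
    proof (cases "fst t \<inter> fst s = fst t")
      case True
      then show ?thesis using Ct C(1) Vf_fb_iff[OF t] by auto
    next
      case False
      then show ?thesis using ok Vf_bU[OF s] by auto
    qed
    moreover have "form_bounded s"
    proof (cases "fst t \<inter> fst s = fst s")
      case True
      then show ?thesis using Cs C(1) Vf_fb_iff[OF s] by auto
    next
      case False
      then show ?thesis using ok Vf_bU[OF t] by auto
    qed
    ultimately show "form_bounded t \<and> form_bounded s" ..
  next
    assume "form_bounded t \<and> form_bounded s"
    then obtain C1 C2 where C1: "C1 \<ge> 0" "\<And>x. x \<in> fst t \<Longrightarrow> Re (snd t x x) \<le> C1 * (norm x)\<^sup>2"
      and C2: "C2 \<ge> 0" "\<And>x. x \<in> fst s \<Longrightarrow> Re (snd s x x) \<le> C2 * (norm x)\<^sup>2"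
      using Vf_fb_iff[OF t] Vf_fb_iff[OF s] by auto
    have "Re (snd (form_add t s) x x) \<le> (C1 + C2) * (norm x)\<^sup>2" if "x \<in> fst t \<inter> fst s" for x
      using C1(2)[of x] C2(2)[of x] that by (simp add: fa_snd distrib_right)
    then show "form_bounded (form_add t s)" using fbiff C1(1) C2(1)
      by (intro iffD2[OF fbiff] exI[of _ "C1 + C2"]) auto
  qed
qed

lemma Vf_add_in:
  assumes t: "t \<in> Vf" and s: "s \<in> Vf" and ok: "form_bounded t \<or> form_bounded s \<or> fst t = fst s"
  shows "form_add t s \<in> Vf"
proof -
  have cl: "closure (fst t \<inter> fst s) = UNIV" using okf_dom[OF t s ok] Vf_cl[OF t] Vf_cl[OF s] by auto
  show ?thesis
    unfolding Vf_iff
    using Vf_add_psesq[OF t s] cl Vf_add_bnd[OF t s ok] Vf_bU[OF t] Vf_bU[OF s]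
    by (auto simp: form_add_def)
qed

lemma zero_form_bounded: "form_bounded zero_form"
  by (auto simp: form_bounded_def zero_form_def)

lemma zero_form_Vf: "zero_form \<in> Vf"
  unfolding Vf_iff by (simp add: zero_form_def psesq_def csub_UNIV)

lemma form_add_zero: "t \<in> Vf \<Longrightarrow> form_add t zero_form = t"
  using Vf_out[of t]
  by (cases t) (auto simp: form_add_def zero_form_def fun_eq_iff)

lemma form_add_comm: "form_add t s = form_add s t"
  by (auto simp: form_add_def fun_eq_iff Int_commute add.commute)

lemma form_add_assoc: "form_add (form_add t s) u = form_add t (form_add s u)"
  by (auto simp: form_add_def fun_eq_iff Int_assoc add.assoc)

lemma oplus_f_def2: "oplus_f a b = (if form_bounded a \<or> form_bounded b \<or> fst a = fst b then Some (form_add a b) else None)"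
  by (simp add: oplus_f_def)

lemma form_ext_unique:
  assumes P1: "psesq UNIV f" and P2: "psesq UNIV g" and C: "0 \<le> C"
    and b1: "\<And>x. Re (f x x) \<le> C * (norm x)\<^sup>2" and b2: "\<And>x. Re (g x x) \<le> C * (norm x)\<^sup>2"
    and cl: "closure D = UNIV" and eq: "\<And>x y. x \<in> D \<Longrightarrow> y \<in> D \<Longrightarrow> f x y = g x y"
  shows "f a b = g a b"
proof -
  define h where "h x y = f x y - g x y" for x y
  have hb: "cmod (h x y) \<le> (2 * C) * norm x * norm y" for x y
  proof -
    have "cmod (h x y) \<le> cmod (f x y) + cmod (g x y)" unfolding h_def by (rule norm_triangle_ineq4)
    also have "\<dots> \<le> C * norm x * norm y + C * norm x * norm y"
      using psesq_bound[OF P1 C, of x y] psesq_bound[OF P2 C, of x y] b1 b2 by auto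
    finally show ?thesis by simp
  qed
  have hdl: "h (x - y) z = h x z - h y z" for x y z
    unfolding h_def using psesq_diff_left[OF P1, of x y z] psesq_diff_left[OF P2, of x y z] by simp
  have hdr: "h z (x - y) = h z x - h z y" for x y z
    unfolding h_def using psesq_diff_right[OF P1, of x y z] psesq_diff_right[OF P2, of x y z] by simp
  have step1: "h x y = 0" if x: "x \<in> D" for x y
  proof (rule small_zero[OF cl, of "2 * C * norm x" _ y])
    show "0 \<le> 2 * C * norm x" using C by simp
    fix w assume w: "w \<in> D"
    have "h x w = 0" unfolding h_def using eq[OF x w] by simp
    then have "h x y = h x (y - w)" using hdr[of x y w] by simp
    then show "norm (h x y) \<le> 2 * C * norm x * norm (y - w)" using hb[of x "y - w"] by simp
  qed
  have "h a b = 0"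
  proof (rule small_zero[OF cl, of "2 * C * norm b" _ a])
    show "0 \<le> 2 * C * norm b" using C by simp
    fix w assume w: "w \<in> D"
    have "h w b = 0" using step1[OF w] .
    then have "h a b = h (a - w) b" using hdl[of a w b] by simp
    then show "norm (h a b) \<le> 2 * C * norm b * norm (a - w)" using hb[of "a - w" b] by (simp add: mult_ac)
  qed
  then show ?thesis by (simp add: h_def)
qed

lemma psesq_diag_zero:
  assumes P: "psesq D f" and z: "\<And>x. x \<in> D \<Longrightarrow> f x x = 0" and x: "x \<in> D" and y: "y \<in> D"
  shows "f x y = 0"
  using psesq_CS[OF P x y] z[OF x] z[OF y] by simp



lemma Vf_eqI:
  assumes "s \<in> Vf" "s' \<in> Vf" "fst s = fst s'" "\<And>x y. x \<in> fst s \<Longrightarrow> y \<in> fst s \<Longrightarrow> snd s x y = snd s' x y"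
  shows "s = s'"
proof -
  have "snd s x y = snd s' x y" for x y
    using assms Vf_out[OF assms(1), of x y] Vf_out[OF assms(2), of x y] by (cases "x \<in> fst s \<and> y \<in> fst s") auto
  then show ?thesis using assms(3) by (simp add: prod_eq_iff fun_eq_iff)
qed

lemma Vf_cancel:
  assumes t: "t \<in> Vf" and s: "s \<in> Vf" and s': "s' \<in> Vf"
    and h1: "oplus_f t s = Some w" and h2: "oplus_f t s' = Some w"
  shows "s = s'"
proof -
  have ok1: "form_bounded t \<or> form_bounded s \<or> fst t = fst s" and e1: "form_add t s = w"
    using h1 by (auto simp: oplus_f_def split: if_splits)
  have ok2: "form_bounded t \<or> form_bounded s' \<or> fst t = fst s'" and e2: "form_add t s' = w"
    using h2 by (auto simp: oplus_f_def split: if_splits)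
  have eq: "form_add t s = form_add t s'" using e1 e2 by simp
  have S: "fst t \<inter> fst s = fst t \<inter> fst s'" using arg_cong[OF eq, of fst] by simp
  have V: "snd s x y = snd s' x y" if "x \<in> fst t \<inter> fst s" "y \<in> fst t \<inter> fst s" for x y
  proof -
    have "snd (form_add t s) x y = snd (form_add t s') x y" using eq by simp
    then show ?thesis using that S by (simp add: fa_snd)
  qed
  have bnd_transfer: "form_bounded b'" if bb: "b \<in> Vf" "b' \<in> Vf" "form_bounded b" "fst b' \<subseteq> fst b"
      and ee: "\<And>x. x \<in> fst b' \<Longrightarrow> snd b' x x = snd b x x" for b b'
  proof -
    obtain C where "C \<ge> 0" "\<forall>x\<in>fst b. Re (snd b x x) \<le> C * (norm x)\<^sup>2" using Vf_fb_iff[OF bb(1)] bb(3) by auto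
    then show ?thesis using Vf_fb_iff[OF bb(2)] ee bb(4) by (metis subsetD)
  qed
  have D: "fst s = fst s'"
  proof (cases "form_bounded t")
    case True then show ?thesis using Vf_bU[OF t] S by simp
  next
    case nt: False
    show ?thesis
    proof (cases "form_bounded s")
      case bs: True
      show ?thesis
      proof (cases "form_bounded s'")
        case True then show ?thesis using bs Vf_bU[OF s] Vf_bU[OF s'] by simp
      next
        case False
        then have ft: "fst t = fst s'" using ok2 nt by simp
        have fsU: "fst s = UNIV" using Vf_bU[OF s bs] .
        have "form_bounded s'"
          by (rule bnd_transfer[OF s s' bs]) (use fsU ft V in auto)
        then show ?thesis using False by simp
      qed
    next
      case nbs: False
      then have ft: "fst t = fst s" using ok1 nt by simp
      show ?thesis
      proof (cases "form_bounded s'")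
        case bs': True
        have fsU: "fst s' = UNIV" using Vf_bU[OF s' bs'] .
        have "form_bounded s"
          by (rule bnd_transfer[OF s' s bs']) (use fsU ft V S in auto)
        then show ?thesis using nbs by simp
      next
        case False
        then show ?thesis using ok2 nt ft by simp
      qed
    qed
  qed
  show ?thesis
  proof (cases "fst t \<inter> fst s = fst s")
    case True
    show ?thesis by (rule Vf_eqI[OF s s' D]) (use V True in auto)
  next
    case False
    then have nt: "\<not> form_bounded t" using Vf_bU[OF t] by auto
    have bs: "form_bounded s" using ok1 nt False by auto
    have bs': "form_bounded s'" using ok2 nt False D by auto
    have fsU: "fst s = UNIV" and fsU': "fst s' = UNIV" using Vf_bU[OF s bs] Vf_bU[OF s' bs'] by auto
    obtain C1 where C1: "C1 \<ge> 0" "\<forall>x\<in>fst s. Re (snd s x x) \<le> C1 * (norm x)\<^sup>2" using Vf_fb_iff[OF s] bs by auto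
    obtain C2 where C2: "C2 \<ge> 0" "\<forall>x\<in>fst s'. Re (snd s' x x) \<le> C2 * (norm x)\<^sup>2" using Vf_fb_iff[OF s'] bs' by auto
    have P1: "psesq UNIV (snd s)" using Vf_psesq[OF s] fsU by simp
    have P2: "psesq UNIV (snd s')" using Vf_psesq[OF s'] fsU' by simp
    have b1: "Re (snd s x x) \<le> (C1 + C2) * (norm x)\<^sup>2" for x
      using C1 C2 fsU by (metis UNIV_I add_increasing2 distrib_right zero_le_power2 mult_nonneg_nonneg order_trans le_add_same_cancel1)
    have b2: "Re (snd s' x x) \<le> (C1 + C2) * (norm x)\<^sup>2" for x
      using C1 C2 fsU' by (metis UNIV_I add_increasing distrib_right zero_le_power2 mult_nonneg_nonneg order_trans le_add_same_cancel2)
    have "snd s x y = snd s' x y" for x y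
      by (rule form_ext_unique[OF P1 P2 _ b1 b2 Vf_cl[OF t]]) (use C1 C2 V fsU in auto)
    then show ?thesis using D by (simp add: prod_eq_iff fun_eq_iff)
  qed
qed

lemma Vf_pos:
  assumes t: "t \<in> Vf" and s: "s \<in> Vf" and h: "oplus_f t s = Some zero_form"
  shows "t = zero_form \<and> s = zero_form"
proof -
  have e: "form_add t s = zero_form" using h by (auto simp: oplus_f_def split: if_splits)
  have "fst t \<inter> fst s = UNIV" using arg_cong[OF e, of fst] by (simp add: zero_form_def)
  then have ft: "fst t = UNIV" and fs: "fst s = UNIV" by auto
  have sum0: "snd t x y + snd s x y = 0" for x y
  proof -
    have "snd (form_add t s) x y = snd zero_form x y" using e by simp
    then show ?thesis using ft fs by (simp add: fa_snd zero_form_def)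
  qed
  have Pt: "psesq UNIV (snd t)" and Ps: "psesq UNIV (snd s)" using Vf_psesq[OF t] Vf_psesq[OF s] ft fs by auto
  have dt: "snd t x x = 0" and ds: "snd s x x = 0" for x
  proof -
    have a: "snd t x x \<in> \<real>" "0 \<le> Re (snd t x x)" using Pt by (auto simp: psesq_def)
    have b: "snd s x x \<in> \<real>" "0 \<le> Re (snd s x x)" using Ps by (auto simp: psesq_def)
    have c: "Re (snd t x x) + Re (snd s x x) = 0" using arg_cong[OF sum0[of x x], of Re] by simp
    show "snd t x x = 0" using a b c by (simp add: complex_eq_iff complex_is_Real_iff)
    show "snd s x x = 0" using a b c by (simp add: complex_eq_iff complex_is_Real_iff)
  qed
  have "t = zero_form"
    by (rule Vf_eqI[OF t zero_form_Vf]) (use ft psesq_diag_zero[OF Pt] dt in \<open>auto simp: zero_form_def\<close>)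
  moreover have "s = zero_form"
    by (rule Vf_eqI[OF s zero_form_Vf]) (use fs psesq_diag_zero[OF Ps] ds in \<open>auto simp: zero_form_def\<close>)
  ultimately show ?thesis ..
qed

lemma gea_Vf: "gea (Vf :: 'a::complex_normed_vector form set) oplus_f zero_form"
  unfolding gea_def
proof (intro conjI ballI allI impI)
  show "zero_form \<in> (Vf :: 'a form set)" by (rule zero_form_Vf)
next
  fix x y w assume x: "x \<in> (Vf :: 'a form set)" and y: "y \<in> (Vf :: 'a form set)" and h: "oplus_f x y = Some w"
  then show "w \<in> (Vf :: 'a form set)" using Vf_add_in[OF x y] by (auto simp: oplus_f_def split: if_splits)
next
  fix x y assume "x \<in> (Vf :: 'a form set)" "y \<in> (Vf :: 'a form set)"
  show "oplus_f x y = oplus_f y x" by (auto simp: oplus_f_def form_add_comm)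
next
  fix x y u assume x: "x \<in> (Vf :: 'a form set)" and y: "y \<in> (Vf :: 'a form set)" and u: "u \<in> (Vf :: 'a form set)"
  show "Option.bind (oplus_f x y) (\<lambda>v. oplus_f v u) = Option.bind (oplus_f y u) (oplus_f x)"
    using gen_assoc[where op = oplus_f and bnd = form_bounded and dm = fst and add = form_add and E = Vf,
        OF oplus_f_def2 x y u fa_fst Vf_bU Vf_add_bnd form_add_assoc]
    by simp
next
  fix x assume x: "x \<in> (Vf :: 'a form set)"
  show "oplus_f x zero_form = Some x" by (simp add: oplus_f_def form_add_zero[OF x] zero_form_bounded)
next
  fix x y y' w assume x: "x \<in> (Vf :: 'a form set)" and y: "y \<in> (Vf :: 'a form set)" and y': "y' \<in> (Vf :: 'a form set)"
    and h: "oplus_f x y = Some w \<and> oplus_f x y' = Some w"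
  then show "y = y'" using Vf_cancel by blast
next
  fix x y assume "x \<in> (Vf :: 'a form set)" "y \<in> (Vf :: 'a form set)" "oplus_f x y = Some zero_form"
  then show "x = zero_form" "y = zero_form" using Vf_pos by blast+
qed



lemma V_iff:
  "A \<in> V \<longleftrightarrow> csubspace (fst A) \<and> closure (fst A) = UNIV \<and>
     (\<forall>x\<in>fst A. \<forall>y\<in>fst A. snd A (x + y) = snd A x + snd A y) \<and>
     (\<forall>c. \<forall>x\<in>fst A. snd A (c *\<^sub>C x) = c *\<^sub>C snd A x) \<and>
     (\<forall>x. x \<notin> fst A \<longrightarrow> snd A x = 0) \<and>
     (\<forall>x\<in>fst A. cinner (snd A x) x \<in> \<real> \<and> 0 \<le> Re (cinner (snd A x) x)) \<and>
     (op_bounded A \<longrightarrow> fst A = UNIV)"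
  unfolding V_def is_op_def Let_def by auto

lemma V_sub: "A \<in> V \<Longrightarrow> csubspace (fst A)" by (simp add: V_iff)
lemma V_cl: "A \<in> V \<Longrightarrow> closure (fst A) = UNIV" by (simp add: V_iff)
lemma V_addl: "A \<in> V \<Longrightarrow> x \<in> fst A \<Longrightarrow> y \<in> fst A \<Longrightarrow> snd A (x + y) = snd A x + snd A y" by (simp add: V_iff)
lemma V_scl: "A \<in> V \<Longrightarrow> x \<in> fst A \<Longrightarrow> snd A (c *\<^sub>C x) = c *\<^sub>C snd A x" by (simp add: V_iff)
lemma V_out: "A \<in> V \<Longrightarrow> x \<notin> fst A \<Longrightarrow> snd A x = 0" by (simp add: V_iff)
lemma V_pos: "A \<in> V \<Longrightarrow> x \<in> fst A \<Longrightarrow> cinner (snd A x) x \<in> \<real> \<and> 0 \<le> Re (cinner (snd A x) x)" by (simp add: V_iff)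
lemma V_bU: "A \<in> V \<Longrightarrow> op_bounded A \<Longrightarrow> fst A = UNIV" by (simp add: V_iff)

lemma V_diff: "A \<in> V \<Longrightarrow> x \<in> fst A \<Longrightarrow> y \<in> fst A \<Longrightarrow> snd A (x - y) = snd A x - snd A y"
proof -
  assume A: "A \<in> V" and x: "x \<in> fst A" and y: "y \<in> fst A"
  have xy: "x - y \<in> fst A" using V_sub[OF A] x y by (rule csub_diff)
  have "snd A x = snd A ((x - y) + y)" by simp
  also have "\<dots> = snd A (x - y) + snd A y" by (rule V_addl[OF A xy y])
  finally show ?thesis by simp
qed

lemma V_psesq:
  assumes A: "A \<in> V"
  shows "psesq (fst A) (\<lambda>x y. cinner (snd A x) y)"
  unfolding psesq_def
  using V_sub[OF A] V_addl[OF A] V_scl[OF A] V_pos[OF A]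
  by (simp add: cinner_add_left cinner_add_right cinner_scaleC_left cinner_scaleC_right)

lemma opb_nonneg:
  assumes "op_bounded A"
  shows "\<exists>C\<ge>0. \<forall>x\<in>fst A. norm (snd A x) \<le> C * norm x"
proof -
  obtain C where C: "\<And>x. x \<in> fst A \<Longrightarrow> norm (snd A x) \<le> C * norm x" using assms by (auto simp: op_bounded_def)
  have "norm (snd A x) \<le> max C 0 * norm x" if "x \<in> fst A" for x
  proof -
    have "C * norm x \<le> max C 0 * norm x" by (rule mult_right_mono) auto
    then show ?thesis using C[OF that] by linarith
  qed
  then show ?thesis by (intro exI[of _ "max C 0"]) auto
qed

lemma V_ob_iff:
  assumes A: "A \<in> V"
  shows "op_bounded A \<longleftrightarrow> (\<exists>C\<ge>0. \<forall>x\<in>fst A. Re (cinner (snd A x) x) \<le> C * (norm x)\<^sup>2)"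
proof
  assume "op_bounded A" then show "\<exists>C\<ge>0. \<forall>x\<in>fst A. Re (cinner (snd A x) x) \<le> C * (norm x)\<^sup>2"
    by (rule op_bounded_quad)
next
  assume "\<exists>C\<ge>0. \<forall>x\<in>fst A. Re (cinner (snd A x) x) \<le> C * (norm x)\<^sup>2"
  then obtain C where C: "C \<ge> 0" "\<And>x. x \<in> fst A \<Longrightarrow> Re (cinner (snd A x) x) \<le> C * (norm x)\<^sup>2" by auto
  have "norm (snd A x) \<le> C * norm x" if "x \<in> fst A" for x
    by (rule op_bound_from_form[OF V_cl[OF A] V_psesq[OF A] C(1)]) (use C(2) that in auto)
  then show "op_bounded A" unfolding op_bounded_def by auto
qed

lemma oa_fst[simp]: "fst (op_add A B) = fst A \<inter> fst B" by (simp add: op_add_def)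
lemma oa_snd: "x \<in> fst A \<inter> fst B \<Longrightarrow> snd (op_add A B) x = snd A x + snd B x" by (simp add: op_add_def)
lemma oa_snd_out: "x \<notin> fst A \<inter> fst B \<Longrightarrow> snd (op_add A B) x = 0" by (auto simp: op_add_def)

lemma okD_dom:
  assumes "A \<in> V" "B \<in> V" "op_bounded A \<or> op_bounded B \<or> fst A = fst B"
  shows "fst A \<inter> fst B = fst A \<or> fst A \<inter> fst B = fst B"
  using assms V_bU[OF assms(1)] V_bU[OF assms(2)] by auto

lemma V_add_basic:
  assumes A: "A \<in> V" and B: "B \<in> V" and ok: "op_bounded A \<or> op_bounded B \<or> fst A = fst B"
  shows "csubspace (fst (op_add A B)) \<and> closure (fst (op_add A B)) = UNIV \<and>
     (\<forall>x\<in>fst (op_add A B). \<forall>y\<in>fst (op_add A B). snd (op_add A B) (x + y) = snd (op_add A B) x + snd (op_add A B) y) \<and>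
     (\<forall>c. \<forall>x\<in>fst (op_add A B). snd (op_add A B) (c *\<^sub>C x) = c *\<^sub>C snd (op_add A B) x) \<and>
     (\<forall>x. x \<notin> fst (op_add A B) \<longrightarrow> snd (op_add A B) x = 0) \<and>
     (\<forall>x\<in>fst (op_add A B). cinner (snd (op_add A B) x) x \<in> \<real> \<and> 0 \<le> Re (cinner (snd (op_add A B) x) x))"
proof (intro conjI ballI allI impI)
  have sA: "csubspace (fst A)" and sB: "csubspace (fst B)" using A B by (auto intro: V_sub)
  show "csubspace (fst (op_add A B))" using csub_Int[OF sA sB] by simp
  show "closure (fst (op_add A B)) = UNIV" using okD_dom[OF A B ok] V_cl[OF A] V_cl[OF B] by auto
  fix x assume x: "x \<in> fst (op_add A B)"
  {
    fix y assume y: "y \<in> fst (op_add A B)"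
    have "x + y \<in> fst (op_add A B)" using x y sA sB by (auto intro: csub_add)
    then show "snd (op_add A B) (x + y) = snd (op_add A B) x + snd (op_add A B) y"
      using x y V_addl[OF A] V_addl[OF B] by (simp add: oa_snd algebra_simps)
  }
  fix c
  have "c *\<^sub>C x \<in> fst (op_add A B)" using x sA sB by (auto intro: csub_scale)
  then show "snd (op_add A B) (c *\<^sub>C x) = c *\<^sub>C snd (op_add A B) x"
    using x V_scl[OF A] V_scl[OF B] by (simp add: oa_snd scaleC_add_right)
next
  fix x assume x: "x \<in> fst (op_add A B)"
  show "cinner (snd (op_add A B) x) x \<in> \<real>" "0 \<le> Re (cinner (snd (op_add A B) x) x)"
    using x V_pos[OF A, of x] V_pos[OF B, of x] by (auto simp: oa_snd cinner_add_left)
next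
  fix x assume "x \<notin> fst (op_add A B)"
  then show "snd (op_add A B) x = 0" by (simp add: oa_snd_out)
qed

lemma V_add_bnd:
  assumes A: "A \<in> V" and B: "B \<in> V" and ok: "op_bounded A \<or> op_bounded B \<or> fst A = fst B"
  shows "op_bounded (op_add A B) \<longleftrightarrow> op_bounded A \<and> op_bounded B"
proof
  assume ob: "op_bounded (op_add A B)"
  obtain C where C: "C \<ge> 0" "\<And>x. x \<in> fst A \<inter> fst B \<Longrightarrow> Re (cinner (snd (op_add A B) x) x) \<le> C * (norm x)\<^sup>2"
    using op_bounded_quad[OF ob] by auto
  have CA: "Re (cinner (snd A x) x) \<le> C * (norm x)\<^sup>2" if "x \<in> fst A \<inter> fst B" for x
    using C(2)[OF that] V_pos[OF B, of x] that by (simp add: oa_snd cinner_add_left)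
  have CB: "Re (cinner (snd B x) x) \<le> C * (norm x)\<^sup>2" if "x \<in> fst A \<inter> fst B" for x
    using C(2)[OF that] V_pos[OF A, of x] that by (simp add: oa_snd cinner_add_left)
  have "op_bounded A"
  proof (cases "fst A \<inter> fst B = fst A")
    case True
    then have "\<forall>x\<in>fst A. Re (cinner (snd A x) x) \<le> C * (norm x)\<^sup>2" using CA by blast
    then show ?thesis using C(1) V_ob_iff[OF A] by blast
  next
    case False
    have "\<not> op_bounded B"
    proof
      assume "op_bounded B"
      then have "fst B = UNIV" by (rule V_bU[OF B])
      then show False using False by simp
    qed
    moreover have "fst A \<noteq> fst B" using False by auto
    ultimately show ?thesis using ok by blast
  qed
  moreover have "op_bounded B"
  proof (cases "fst A \<inter> fst B = fst B")
    case True
    then have "\<forall>x\<in>fst B. Re (cinner (snd B x) x) \<le> C * (norm x)\<^sup>2" using CB by blast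
    then show ?thesis using C(1) V_ob_iff[OF B] by blast
  next
    case False
    have "\<not> op_bounded A"
    proof
      assume "op_bounded A"
      then have "fst A = UNIV" by (rule V_bU[OF A])
      then show False using False by simp
    qed
    moreover have "fst A \<noteq> fst B" using False by auto
    ultimately show ?thesis using ok by blast
  qed
  ultimately show "op_bounded A \<and> op_bounded B" ..
next
  assume h: "op_bounded A \<and> op_bounded B"
  obtain C1 where C1: "\<forall>x\<in>fst A. norm (snd A x) \<le> C1 * norm x" using opb_nonneg[of A] h by auto
  obtain C2 where C2: "\<forall>x\<in>fst B. norm (snd B x) \<le> C2 * norm x" using opb_nonneg[of B] h by auto
  have bnd: "norm (snd (op_add A B) x) \<le> (C1 + C2) * norm x" if x: "x \<in> fst A \<inter> fst B" for x
  proof -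
    have "snd (op_add A B) x = snd A x + snd B x" by (rule oa_snd[OF x])
    then have "norm (snd (op_add A B) x) \<le> norm (snd A x) + norm (snd B x)"
      by (simp only: norm_triangle_ineq)
    also have "\<dots> \<le> C1 * norm x + C2 * norm x" using C1 C2 x by (intro add_mono) auto
    also have "\<dots> = (C1 + C2) * norm x" by (simp only: distrib_right)
    finally show ?thesis .
  qed
  show "op_bounded (op_add A B)" unfolding op_bounded_def oa_fst
    by (rule exI[of _ "C1 + C2"]) (use bnd in blast)
qed

lemma V_add_in:
  assumes A: "A \<in> V" and B: "B \<in> V" and ok: "op_bounded A \<or> op_bounded B \<or> fst A = fst B"
  shows "op_add A B \<in> V"
  unfolding V_iff
  using V_add_basic[OF A B ok] V_add_bnd[OF A B ok] V_bU[OF A] V_bU[OF B] by auto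

lemma zero_op_bounded: "op_bounded (zero_op :: 'a::real_normed_vector lop)"
  unfolding op_bounded_def zero_op_def by (intro exI[of _ 0]) simp

lemma zero_op_V: "zero_op \<in> V"
  unfolding V_iff by (simp add: zero_op_def csub_UNIV)

lemma op_add_zero: "A \<in> V \<Longrightarrow> op_add A zero_op = A"
  using V_out[of A] by (cases A) (auto simp: op_add_def zero_op_def fun_eq_iff)

lemma op_add_comm: "op_add A B = op_add B A"
  by (auto simp: op_add_def fun_eq_iff Int_commute add.commute)

lemma op_add_assoc: "op_add (op_add A B) C = op_add A (op_add B C)"
  by (auto simp: op_add_def fun_eq_iff Int_assoc add.assoc)

lemma oplus_D_def2: "oplus_D a b = (if op_bounded a \<or> op_bounded b \<or> fst a = fst b then Some (op_add a b) else None)"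
  by (simp add: oplus_D_def)

lemma V_eqI:
  assumes "A \<in> V" "B \<in> V" "fst A = fst B" "\<And>x. x \<in> fst A \<Longrightarrow> snd A x = snd B x"
  shows "A = B"
proof -
  have "snd A x = snd B x" for x
    using assms V_out[OF assms(1), of x] V_out[OF assms(2), of x] by (cases "x \<in> fst A") auto
  then show ?thesis using assms(3) by (simp add: prod_eq_iff fun_eq_iff)
qed



lemma V_cancel:
  assumes t: "A \<in> V" and s: "B \<in> V" and s': "B' \<in> V"
    and h1: "oplus_D A B = Some w" and h2: "oplus_D A B' = Some w"
  shows "B = B'"
proof -
  have ok1: "op_bounded A \<or> op_bounded B \<or> fst A = fst B" and e1: "op_add A B = w"
    using h1 by (auto simp: oplus_D_def split: if_splits)
  have ok2: "op_bounded A \<or> op_bounded B' \<or> fst A = fst B'" and e2: "op_add A B' = w"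
    using h2 by (auto simp: oplus_D_def split: if_splits)
  have eq: "op_add A B = op_add A B'" using e1 e2 by simp
  have S: "fst A \<inter> fst B = fst A \<inter> fst B'" using arg_cong[OF eq, of fst] by simp
  have Vx: "snd B x = snd B' x" if "x \<in> fst A \<inter> fst B" for x
  proof -
    have "snd (op_add A B) x = snd (op_add A B') x" using eq by simp
    then show ?thesis using that S by (simp add: oa_snd)
  qed
  have bnd_transfer: "op_bounded b'" if bb: "op_bounded b" "fst b' \<subseteq> fst b"
      and ee: "\<And>x. x \<in> fst b' \<Longrightarrow> snd b' x = snd b x" for b b' :: "'a lop"
  proof -
    obtain C where C: "\<forall>x\<in>fst b. norm (snd b x) \<le> C * norm x" using bb(1) by (auto simp: op_bounded_def)
    have "\<forall>x\<in>fst b'. norm (snd b' x) \<le> C * norm x" using C ee bb(2) by auto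
    then show ?thesis unfolding op_bounded_def by blast
  qed
  have D: "fst B = fst B'"
  proof (cases "op_bounded A")
    case True then show ?thesis using V_bU[OF t] S by simp
  next
    case nt: False
    show ?thesis
    proof (cases "op_bounded B")
      case bs: True
      show ?thesis
      proof (cases "op_bounded B'")
        case True then show ?thesis using bs V_bU[OF s] V_bU[OF s'] by simp
      next
        case False
        then have ft: "fst A = fst B'" using ok2 nt by simp
        have fsU: "fst B = UNIV" using V_bU[OF s bs] .
        have "op_bounded B'"
          by (rule bnd_transfer[OF bs]) (use fsU ft Vx in auto)
        then show ?thesis using False by simp
      qed
    next
      case nbs: False
      then have ft: "fst A = fst B" using ok1 nt by simp
      show ?thesis
      proof (cases "op_bounded B'")
        case bs': True
        have fsU: "fst B' = UNIV" using V_bU[OF s' bs'] .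
        have "op_bounded B"
          by (rule bnd_transfer[OF bs']) (use fsU ft Vx in auto)
        then show ?thesis using nbs by simp
      next
        case False
        then show ?thesis using ok2 nt ft by simp
      qed
    qed
  qed
  show ?thesis
  proof (cases "fst A \<inter> fst B = fst B")
    case True
    show ?thesis by (rule V_eqI[OF s s' D]) (use Vx True in auto)
  next
    case False
    have nt: "\<not> op_bounded A"
    proof
      assume "op_bounded A" then have "fst A = UNIV" by (rule V_bU[OF t])
      then show False using False by simp
    qed
    have bs: "op_bounded B" using ok1 nt False by auto
    have bs': "op_bounded B'" using ok2 nt False D by auto
    have fsU: "fst B = UNIV" and fsU': "fst B' = UNIV" using V_bU[OF s bs] V_bU[OF s' bs'] by auto
    obtain C1 where C1: "C1 \<ge> 0" "\<forall>x\<in>fst B. norm (snd B x) \<le> C1 * norm x" using opb_nonneg[OF bs] by auto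
    obtain C2 where C2: "C2 \<ge> 0" "\<forall>x\<in>fst B'. norm (snd B' x) \<le> C2 * norm x" using opb_nonneg[OF bs'] by auto
    have "snd B z - snd B' z = 0" for z
    proof (rule small_zero[OF V_cl[OF t], of "C1 + C2"])
      show "0 \<le> C1 + C2" using C1 C2 by simp
      fix w assume w: "w \<in> fst A"
      have ww: "snd B w = snd B' w" using Vx[of w] w fsU by simp
      have "snd B z - snd B' z = snd B (z - w) - snd B' (z - w)"
        using V_diff[OF s, of z w] V_diff[OF s', of z w] fsU fsU' ww by simp
      also have "norm \<dots> \<le> norm (snd B (z - w)) + norm (snd B' (z - w))" by (rule norm_triangle_ineq4)
      also have "\<dots> \<le> C1 * norm (z - w) + C2 * norm (z - w)" using C1 C2 fsU fsU' by (intro add_mono) auto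
      also have "\<dots> = (C1 + C2) * norm (z - w)" by (simp only: distrib_right)
      finally show "norm (snd B z - snd B' z) \<le> (C1 + C2) * norm (z - w)" .
    qed
    then show ?thesis using D by (simp add: prod_eq_iff fun_eq_iff)
  qed
qed

lemma V_pos0:
  assumes t: "A \<in> V" and s: "B \<in> V" and h: "oplus_D A B = Some zero_op"
  shows "A = zero_op \<and> B = zero_op"
proof -
  have e: "op_add A B = zero_op" using h by (auto simp: oplus_D_def split: if_splits)
  have "fst A \<inter> fst B = UNIV" using arg_cong[OF e, of fst] by (simp add: zero_op_def)
  then have ft: "fst A = UNIV" and fs: "fst B = UNIV" by auto
  have sum0: "snd A x + snd B x = 0" for x
  proof -
    have "snd (op_add A B) x = snd zero_op x" using e by simp
    then show ?thesis using ft fs by (simp add: oa_snd zero_op_def)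
  qed
  have Pt: "psesq UNIV (\<lambda>x y. cinner (snd A x) y)" using V_psesq[OF t] ft by simp
  have Ps: "psesq UNIV (\<lambda>x y. cinner (snd B x) y)" using V_psesq[OF s] fs by simp
  have dt: "cinner (snd A x) x = 0" and ds: "cinner (snd B x) x = 0" for x
  proof -
    have a: "cinner (snd A x) x \<in> \<real>" "0 \<le> Re (cinner (snd A x) x)" using V_pos[OF t, of x] ft by auto
    have b: "cinner (snd B x) x \<in> \<real>" "0 \<le> Re (cinner (snd B x) x)" using V_pos[OF s, of x] fs by auto
    have "cinner (snd A x + snd B x) x = 0" using sum0[of x] by simp
    then have "cinner (snd A x) x + cinner (snd B x) x = 0" by (simp add: cinner_add_left)
    then have "Re (cinner (snd A x) x + cinner (snd B x) x) = 0" by (simp only: zero_complex.sel)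
    then have c: "Re (cinner (snd A x) x) + Re (cinner (snd B x) x) = 0" by (simp only: plus_complex.sel)
    show "cinner (snd A x) x = 0" using a b c by (simp add: complex_eq_iff complex_is_Real_iff)
    show "cinner (snd B x) x = 0" using a b c by (simp add: complex_eq_iff complex_is_Real_iff)
  qed
  have zA: "snd A x = 0" for x
  proof -
    have "cinner (snd A x) (snd A x) = 0" using psesq_diag_zero[OF Pt, of x "snd A x"] dt by simp
    then show ?thesis by (simp add: cinner_eq_zero_iff)
  qed
  have zB: "snd B x = 0" for x
  proof -
    have "cinner (snd B x) (snd B x) = 0" using psesq_diag_zero[OF Ps, of x "snd B x"] ds by simp
    then show ?thesis by (simp add: cinner_eq_zero_iff)
  qed
  have "A = zero_op" using ft zA by (simp add: zero_op_def prod_eq_iff fun_eq_iff)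
  moreover have "B = zero_op" using fs zB by (simp add: zero_op_def prod_eq_iff fun_eq_iff)
  ultimately show ?thesis ..
qed

lemma gea_V: "gea (V :: 'a::complex_inner lop set) oplus_D zero_op"
  unfolding gea_def
proof (intro conjI ballI allI impI)
  show "zero_op \<in> (V :: 'a lop set)" by (rule zero_op_V)
next
  fix x y w assume x: "x \<in> (V :: 'a lop set)" and y: "y \<in> (V :: 'a lop set)" and h: "oplus_D x y = Some w"
  then show "w \<in> (V :: 'a lop set)" using V_add_in[OF x y] by (auto simp: oplus_D_def split: if_splits)
next
  fix x y assume "x \<in> (V :: 'a lop set)" "y \<in> (V :: 'a lop set)"
  show "oplus_D x y = oplus_D y x" by (auto simp: oplus_D_def op_add_comm)
next
  fix x y u assume x: "x \<in> (V :: 'a lop set)" and y: "y \<in> (V :: 'a lop set)" and u: "u \<in> (V :: 'a lop set)"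
  show "Option.bind (oplus_D x y) (\<lambda>v. oplus_D v u) = Option.bind (oplus_D y u) (oplus_D x)"
    using gen_assoc[where op = oplus_D and bnd = op_bounded and dm = fst and add = op_add and E = V,
        OF oplus_D_def2 x y u oa_fst V_bU V_add_bnd op_add_assoc]
    by simp
next
  fix x assume x: "x \<in> (V :: 'a lop set)"
  show "oplus_D x zero_op = Some x" by (simp add: oplus_D_def op_add_zero[OF x] zero_op_bounded)
next
  fix x y y' w assume x: "x \<in> (V :: 'a lop set)" and y: "y \<in> (V :: 'a lop set)" and y': "y' \<in> (V :: 'a lop set)"
    and h: "oplus_D x y = Some w \<and> oplus_D x y' = Some w"
  then show "y = y'" using V_cancel by blast
next
  fix x y assume "x \<in> (V :: 'a lop set)" "y \<in> (V :: 'a lop set)" "oplus_D x y = Some zero_op"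
  then show "x = zero_op" "y = zero_op" using V_pos0 by blast+
qed



lemma bb_cinner: "bounded_bilinear (cinner :: 'a::complex_inner \<Rightarrow> 'a \<Rightarrow> complex)"
proof
  fix a a' b b' :: 'a and r :: real
  show "cinner (a + a') b = cinner a b + cinner a' b" by (rule cinner_add_left)
  show "cinner a (b + b') = cinner a b + cinner a b'" by (rule cinner_add_right)
  show "cinner (r *\<^sub>R a) b = r *\<^sub>R cinner a b" by (simp add: cinner_scaleR_left scaleR_conv_of_real)
  show "cinner a (r *\<^sub>R b) = r *\<^sub>R cinner a b" by (simp add: cinner_scaleR_right scaleR_conv_of_real)
  show "\<exists>K. \<forall>a b::'a. cmod (cinner a b) \<le> norm a * norm b * K"
    by (rule exI[of _ 1]) (simp add: cinner_CS)
qed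

lemma bb_form:
  fixes f :: "'a::complex_normed_vector \<Rightarrow> 'a \<Rightarrow> complex"
  assumes P: "psesq UNIV f" and C: "0 \<le> C" and b: "\<And>x. Re (f x x) \<le> C * (norm x)\<^sup>2"
  shows "bounded_bilinear f"
proof
  fix a a' b b' :: 'a and r :: real
  show "f (a + a') b = f a b + f a' b" using P by (simp add: psesq_def)
  show "f a (b + b') = f a b + f a b'" using P by (simp add: psesq_def)
  have "f (complex_of_real r *\<^sub>C a) b = complex_of_real r * f a b" using P by (simp add: psesq_def)
  then show "f (r *\<^sub>R a) b = r *\<^sub>R f a b" by (simp add: scaleC_of_real scaleR_conv_of_real)
  have "f a (complex_of_real r *\<^sub>C b) = cnj (complex_of_real r) * f a b" using P by (simp add: psesq_def)
  then show "f a (r *\<^sub>R b) = r *\<^sub>R f a b" by (simp add: scaleC_of_real scaleR_conv_of_real)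
  show "\<exists>K. \<forall>a b. cmod (f a b) \<le> norm a * norm b * K"
    using psesq_bound[OF P C] b by (intro exI[of _ C]) (simp add: mult_ac)
qed

lemma dense_seq:
  assumes "closure D = UNIV"
  shows "\<exists>s. (\<forall>n. s n \<in> D) \<and> s \<longlonglongrightarrow> (a::'a::real_normed_vector)"
proof -
  have "a \<in> closure D" using assms by simp
  then show ?thesis by (simp add: closure_sequential)
qed

lemma riesz_ext:
  fixes E :: "'a::chilbert \<Rightarrow> 'a" and y :: "'a \<Rightarrow> 'a \<Rightarrow> complex"
  assumes cl: "closure D = UNIV" and sub: "csubspace D"
    and Ediff: "\<And>u v. u \<in> D \<Longrightarrow> v \<in> D \<Longrightarrow> E (u - v) = E u - E v"
    and P: "psesq UNIV y" and C: "0 \<le> C" and yb: "\<And>x. Re (y x x) \<le> C * (norm x)\<^sup>2"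
    and rep: "\<And>u v. u \<in> D \<Longrightarrow> v \<in> D \<Longrightarrow> y u v = cinner (E u) v"
  shows "\<exists>b. \<forall>v. cinner b v = y a v"
proof -
  have Eb: "norm (E u) \<le> C * norm u" if u: "u \<in> D" for u
  proof (rule density_bound[OF cl])
    show "0 \<le> C * norm u" using C by simp
    fix v assume v: "v \<in> D"
    show "cmod (cinner (E u) v) \<le> C * norm u * norm v"
      using psesq_bound[OF P C, of u v] yb rep[OF u v] by simp
  qed
  obtain s where s: "\<And>n. s n \<in> D" "s \<longlonglongrightarrow> a" using dense_seq[OF cl, of a] by blast
  have "Cauchy s" using s(2) by (rule LIMSEQ_imp_Cauchy)
  have "Cauchy (\<lambda>n. E (s n))"
  proof (rule CauchyI)
    fix e :: real assume e: "0 < e"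
    have e': "0 < e / (C + 1)" using e C by simp
    obtain M where M: "\<And>m n. m \<ge> M \<Longrightarrow> n \<ge> M \<Longrightarrow> norm (s m - s n) < e / (C + 1)"
      using CauchyD[OF \<open>Cauchy s\<close> e'] by blast
    have "norm (E (s m) - E (s n)) < e" if "m \<ge> M" "n \<ge> M" for m n
    proof -
      have d: "s m - s n \<in> D" using sub s(1)[of m] s(1)[of n] by (rule csub_diff)
      have "norm (E (s m) - E (s n)) = norm (E (s m - s n))" using Ediff[OF s(1) s(1)] by simp
      also have "\<dots> \<le> C * norm (s m - s n)" by (rule Eb[OF d])
      also have "\<dots> \<le> C * (e / (C + 1))" using M[OF that] C by (intro mult_left_mono) auto
      also have "\<dots> < e" using C e by (simp add: field_simps)
      finally show ?thesis .
    qed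
    then show "\<exists>M. \<forall>m\<ge>M. \<forall>n\<ge>M. norm (E (s m) - E (s n)) < e" by blast
  qed
  then have "convergent (\<lambda>n. E (s n))" by (simp add: Cauchy_convergent_iff)
  then obtain b where b: "(\<lambda>n. E (s n)) \<longlonglongrightarrow> b" by (auto simp: convergent_def)
  have "cinner b v = y a v" for v
  proof -
    obtain t where t: "\<And>n. t n \<in> D" "t \<longlonglongrightarrow> v" using dense_seq[OF cl, of v] by blast
    have l1: "(\<lambda>n. cinner (E (s n)) (t n)) \<longlonglongrightarrow> cinner b v"
      by (rule bounded_bilinear.tendsto[OF bb_cinner b t(2)])
    have l2: "(\<lambda>n. y (s n) (t n)) \<longlonglongrightarrow> y a v"
      by (rule bounded_bilinear.tendsto[OF bb_form[OF P C yb] s(2) t(2)])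
    have "(\<lambda>n. y (s n) (t n)) = (\<lambda>n. cinner (E (s n)) (t n))" using rep s(1) t(1) by auto
    then show ?thesis using l1 l2 LIMSEQ_unique by metis
  qed
  then show ?thesis by blast
qed



definition frm :: "'a::complex_inner lop \<Rightarrow> 'a form" where
  "frm A = (fst A, \<lambda>x y. if x \<in> fst A \<and> y \<in> fst A then cinner (snd A x) y else 0)"

lemma frm_fst[simp]: "fst (frm A) = fst A" by (simp add: frm_def)
lemma frm_snd: "x \<in> fst A \<Longrightarrow> y \<in> fst A \<Longrightarrow> snd (frm A) x y = cinner (snd A x) y" by (simp add: frm_def)

lemma psesq_cong:
  assumes P: "psesq D f" and eq: "\<And>x y. x \<in> D \<Longrightarrow> y \<in> D \<Longrightarrow> g x y = f x y"
  shows "psesq D g"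
proof -
  have s: "csubspace D" using P by (simp add: psesq_def)
  show ?thesis
    unfolding psesq_def
  proof (intro conjI ballI allI)
    show "csubspace D" by (rule s)
  next
    fix x y z assume x: "x \<in> D" and y: "y \<in> D" and z: "z \<in> D"
    have xy: "x + y \<in> D" using s x y by (rule csub_add)
    show "g (x + y) z = g x z + g y z" using eq x y z xy P by (simp add: psesq_def)
    show "g z (x + y) = g z x + g z y" using eq x y z xy P by (simp add: psesq_def)
  next
    fix c x y assume x: "x \<in> D" and y: "y \<in> D"
    have "c *\<^sub>C x \<in> D" "c *\<^sub>C y \<in> D" using s x y by (auto intro: csub_scale)
    then show "g (c *\<^sub>C x) y = c * g x y" "g x (c *\<^sub>C y) = cnj c * g x y"
      using eq x y P by (simp_all add: psesq_def)
  next
    fix x assume x: "x \<in> D"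
    show "g x x \<in> \<real>" "0 \<le> Re (g x x)" using eq x P by (simp_all add: psesq_def)
  qed
qed

lemma frm_psesq: "A \<in> V \<Longrightarrow> psesq (fst A) (snd (frm A))"
  by (rule psesq_cong[OF V_psesq]) (simp_all add: frm_snd)

lemma frm_bnd:
  assumes A: "A \<in> V"
  shows "form_bounded (frm A) \<longleftrightarrow> op_bounded A"
proof -
  have e: "frm A = (fst A, snd (frm A))" by (simp add: frm_def)
  have "form_bounded (frm A) \<longleftrightarrow> (\<exists>C\<ge>0. \<forall>x\<in>fst A. Re (snd (frm A) x x) \<le> C * (norm x)\<^sup>2)"
    by (subst e) (rule form_bounded_iff_quad[OF frm_psesq[OF A]])
  also have "\<dots> \<longleftrightarrow> (\<exists>C\<ge>0. \<forall>x\<in>fst A. Re (cinner (snd A x) x) \<le> C * (norm x)\<^sup>2)"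
    by (simp add: frm_snd)
  also have "\<dots> \<longleftrightarrow> op_bounded A" using V_ob_iff[OF A] by simp
  finally show ?thesis .
qed

lemma frm_Vf: "A \<in> V \<Longrightarrow> frm A \<in> Vf"
  unfolding Vf_iff using frm_psesq[of A] V_cl[of A] frm_bnd[of A] V_bU[of A]
  by (auto simp: frm_def)

lemma frm_Gf: "A \<in> V \<Longrightarrow> frm A \<in> Gf"
  unfolding Gf_def using frm_Vf[of A] by (auto simp: frm_snd intro!: bexI[of _ A])

lemma Gf_frm:
  assumes "t \<in> Gf" shows "\<exists>A\<in>V. t = frm A"
proof -
  obtain A where A: "A \<in> V" "fst A = fst t" "\<And>x y. x \<in> fst t \<Longrightarrow> y \<in> fst t \<Longrightarrow> snd t x y = cinner (snd A x) y"
    and t: "t \<in> Vf" using assms unfolding Gf_def by blast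
  have "snd t x y = snd (frm A) x y" for x y
    using A Vf_out[OF t, of x y] by (cases "x \<in> fst t \<and> y \<in> fst t") (auto simp: frm_def)
  then have "t = frm A" using A(2) by (simp add: prod_eq_iff fun_eq_iff)
  then show ?thesis using A(1) by blast
qed

lemma Gf_sub: "Gf \<subseteq> Vf" by (auto simp: Gf_def)

lemma frm_inj: "inj_on frm V"
proof (rule inj_onI)
  fix A B assume A: "A \<in> V" and B: "B \<in> V" and e: "frm A = frm B"
  have D: "fst A = fst B" using arg_cong[OF e, of fst] by simp
  show "A = B"
  proof (rule V_eqI[OF A B D])
    fix x assume x: "x \<in> fst A"
    have "snd A x - snd B x = 0"
    proof (rule density_zero[OF V_cl[OF A]])
      fix y assume y: "y \<in> fst A"
      have "snd (frm A) x y = snd (frm B) x y" using e by simp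
      then have "cinner (snd A x) y = cinner (snd B x) y" using x y D by (simp add: frm_snd)
      then show "cinner (snd A x - snd B x) y = 0" by (simp add: cinner_diff_left)
    qed
    then show "snd A x = snd B x" by simp
  qed
qed

lemma frm_add: "form_add (frm A) (frm B) = frm (op_add A B)"
  by (auto simp: form_add_def frm_def op_add_def fun_eq_iff cinner_add_left)

lemma frm_oplus:
  assumes A: "A \<in> V" and B: "B \<in> V"
  shows "oplus_f (frm A) (frm B) = map_option frm (oplus_D A B)"
  using frm_bnd[OF A] frm_bnd[OF B] by (simp add: oplus_f_def oplus_D_def frm_add)

lemma frm_zero: "frm zero_op = zero_form"
  by (simp add: frm_def zero_op_def zero_form_def)

lemma restr_frm:
  assumes A: "A \<in> V" and B: "B \<in> V"
  shows "restr_op Gf oplus_f (frm A) (frm B) = map_option frm (oplus_D A B)"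
proof (cases "oplus_D A B")
  case None then show ?thesis using frm_oplus[OF A B] by (simp add: restr_op_def)
next
  case (Some W)
  then have "W \<in> V" using gea_V A B unfolding gea_def by blast
  then show ?thesis using frm_oplus[OF A B] Some frm_Gf by (simp add: restr_op_def)
qed

lemma iso: "gea_isomorphic (Gf :: 'a::complex_inner form set) (restr_op Gf oplus_f) zero_form (V :: 'a lop set) oplus_D zero_op"
proof -
  have img: "frm ` (V :: 'a lop set) = Gf" using frm_Gf Gf_frm by blast
  have bij: "bij_betw frm (V :: 'a lop set) Gf" using frm_inj img by (simp add: bij_betw_def)
  define \<phi> where "\<phi> = inv_into (V :: 'a lop set) frm"
  have bij2: "bij_betw \<phi> Gf V" unfolding \<phi>_def by (rule bij_betw_inv_into[OF bij])
  have inv: "\<phi> (frm A) = A" if "A \<in> V" for A :: "'a lop"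
    unfolding \<phi>_def using frm_inj that by (rule inv_into_f_f)
  have z: "\<phi> zero_form = zero_op" using inv[OF zero_op_V] by (simp add: frm_zero)
  have hom: "oplus_D (\<phi> x) (\<phi> y) = map_option \<phi> (restr_op Gf oplus_f x y)" if x: "x \<in> Gf" and y: "y \<in> Gf" for x y
  proof -
    obtain A where A: "A \<in> V" "x = frm A" using Gf_frm[OF x] by blast
    obtain B where B: "B \<in> V" "y = frm B" using Gf_frm[OF y] by blast
    have "map_option \<phi> (restr_op Gf oplus_f x y) = map_option (\<phi> \<circ> frm) (oplus_D A B)"
      using restr_frm[OF A(1) B(1)] A(2) B(2) by (simp add: option.map_comp)
    also have "\<dots> = oplus_D A B"
    proof (cases "oplus_D A B")
      case None then show ?thesis by simp
    next
      case (Some W)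
      then have "W \<in> V" using gea_V A(1) B(1) unfolding gea_def by blast
      then show ?thesis using Some inv by simp
    qed
    finally show ?thesis using A B inv by simp
  qed
  show ?thesis unfolding gea_isomorphic_def gea_iso_def using bij2 z hom by blast
qed



lemma mkGf:
  assumes y: "y \<in> Vf" and D: "fst B = fst y"
    and addB: "\<And>u v. u \<in> fst y \<Longrightarrow> v \<in> fst y \<Longrightarrow> snd B (u + v) = snd B u + snd B v"
    and sclB: "\<And>c u. u \<in> fst y \<Longrightarrow> snd B (c *\<^sub>C u) = c *\<^sub>C snd B u"
    and outB: "\<And>u. u \<notin> fst y \<Longrightarrow> snd B u = 0"
    and rep: "\<And>u v. u \<in> fst y \<Longrightarrow> v \<in> fst y \<Longrightarrow> snd y u v = cinner (snd B u) v"
  shows "B \<in> V \<and> frm B = y"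
proof -
  have P: "psesq (fst y) (snd y)" by (rule Vf_psesq[OF y])
  have pos: "cinner (snd B x) x \<in> \<real> \<and> 0 \<le> Re (cinner (snd B x) x)" if "x \<in> fst y" for x
  proof -
    have "snd y x x \<in> \<real> \<and> 0 \<le> Re (snd y x x)" using P that by (simp add: psesq_def)
    then show ?thesis by (simp only: rep[OF that that])
  qed
  have bU: "fst B = UNIV" if ob: "op_bounded B"
  proof -
    obtain C where C: "C \<ge> 0" "\<forall>x\<in>fst B. Re (cinner (snd B x) x) \<le> C * (norm x)\<^sup>2"
      using op_bounded_quad[OF ob] by blast
    have "\<forall>x\<in>fst y. Re (snd y x x) \<le> C * (norm x)\<^sup>2" using C(2) D rep by simp
    then have "form_bounded y" using Vf_fb_iff[OF y] C(1) by blast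
    then show ?thesis using Vf_bU[OF y] D by simp
  qed
  have BV: "B \<in> V"
    unfolding V_iff using psesq_sub[OF P] Vf_cl[OF y] addB sclB outB pos bU D by auto
  have "snd (frm B) u v = snd y u v" for u v
    using rep[of u v] Vf_out[OF y, of u v] D by (cases "u \<in> fst y \<and> v \<in> fst y") (auto simp: frm_def)
  then have "frm B = y" using D by (simp add: prod_eq_iff fun_eq_iff)
  then show ?thesis using BV by blast
qed

lemma Gf_diff:
  fixes A :: "'a::chilbert lop"
  assumes A: "A \<in> V" and C: "C \<in> V" and y: "y \<in> Vf" and h: "oplus_f (frm A) y = Some (frm C)"
  shows "y \<in> Gf"
proof -
  have ok: "form_bounded (frm A) \<or> form_bounded y \<or> fst A = fst y"
    and e: "form_add (frm A) y = frm C" using h by (auto simp: oplus_f_def split: if_splits)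
  have dom: "fst A \<inter> fst y = fst C" using arg_cong[OF e, of fst] by simp
  have vals: "cinner (snd A u) v + snd y u v = cinner (snd C u) v" if "u \<in> fst A \<inter> fst y" "v \<in> fst A \<inter> fst y" for u v
  proof -
    have "snd (form_add (frm A) y) u v = snd (frm C) u v" using e by simp
    moreover have "snd (form_add (frm A) y) u v = snd (frm A) u v + snd y u v" using that by (simp add: fa_snd)
    moreover have "snd (frm A) u v = cinner (snd A u) v" using that by (simp add: frm_snd)
    moreover have "snd (frm C) u v = cinner (snd C u) v" using that dom by (intro frm_snd) auto
    ultimately show ?thesis by simp
  qed
  have P: "psesq (fst y) (snd y)" by (rule Vf_psesq[OF y])
  show ?thesis
  proof (cases "fst y \<subseteq> fst A")
    case True
    then have dC: "fst C = fst y" using dom by auto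
    define B where "B = (fst y, \<lambda>u. if u \<in> fst y then snd C u - snd A u else 0)"
    have sy: "csubspace (fst y)" using psesq_sub[OF P] .
    have "B \<in> V \<and> frm B = y"
    proof (rule mkGf[OF y])
      show "fst B = fst y" by (simp add: B_def)
    next
      fix u v assume u: "u \<in> fst y" and v: "v \<in> fst y"
      have uv: "u + v \<in> fst y" using sy u v by (rule csub_add)
      have uA: "u \<in> fst A" "v \<in> fst A" using True u v by auto
      have ha: "snd A (u + v) = snd A u + snd A v" by (rule V_addl[OF A uA])
      have hc: "snd C (u + v) = snd C u + snd C v" using V_addl[OF C, of u v] u v dC by simp
      show "snd B (u + v) = snd B u + snd B v"
        using u v uv ha hc by (simp add: B_def algebra_simps)
      show "snd y u v = cinner (snd B u) v"
        using vals[of u v] u v True by (auto simp: B_def cinner_diff_left algebra_simps)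
    next
      fix c u assume u: "u \<in> fst y"
      have cu: "c *\<^sub>C u \<in> fst y" using sy u by (rule csub_scale)
      show "snd B (c *\<^sub>C u) = c *\<^sub>C snd B u"
        using u cu True dC V_scl[OF A, of u c] V_scl[OF C, of u c] by (auto simp: B_def scaleC_diff_right)
    next
      fix u assume "u \<notin> fst y" then show "snd B u = 0" by (simp add: B_def)
    qed
    then show ?thesis using frm_Gf by metis
  next
    case False
    have nbA: "\<not> form_bounded (frm A)"
    proof
      assume "form_bounded (frm A)"
      then have "op_bounded A" using frm_bnd[OF A] by simp
      then have "fst A = UNIV" by (rule V_bU[OF A])
      then show False using False by simp
    qed
    have by': "form_bounded y" using ok nbA False by auto
    have yU: "fst y = UNIV" by (rule Vf_bU[OF y by'])
    have dC: "fst C = fst A" using dom yU by simp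
    obtain K where K: "K \<ge> 0" "\<forall>x\<in>fst y. Re (snd y x x) \<le> K * (norm x)\<^sup>2" using Vf_fb_iff[OF y] by' by blast
    have PU: "psesq UNIV (snd y)" using P yU by simp
    define E where "E u = snd C u - snd A u" for u
    have ex: "\<exists>b. \<forall>v. cinner b v = snd y a v" for a
    proof (rule riesz_ext[OF V_cl[OF A] V_sub[OF A] _ PU K(1)])
      fix u v assume u: "u \<in> fst A" and v: "v \<in> fst A"
      show "E (u - v) = E u - E v"
        using V_diff[OF A u v] V_diff[OF C, of u v] u v dC by (simp add: E_def algebra_simps)
      show "snd y u v = cinner (E u) v"
        using vals[of u v] u v yU by (simp add: E_def cinner_diff_left algebra_simps)
    next
      fix x show "Re (snd y x x) \<le> K * (norm x)\<^sup>2" using K yU by simp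
    qed
    define Bf where "Bf a = (SOME b. \<forall>v. cinner b v = snd y a v)" for a
    have Bf: "cinner (Bf a) v = snd y a v" for a v
      unfolding Bf_def using someI_ex[OF ex[of a]] by blast
    have eqI: "b = b'" if "\<And>v. cinner b v = cinner b' v" for b b' :: 'a
    proof -
      have "b - b' = 0" by (rule density_zero[of UNIV]) (simp_all add: cinner_diff_left that)
      then show ?thesis by simp
    qed
    have "(UNIV, Bf) \<in> V \<and> frm (UNIV, Bf) = y"
    proof (rule mkGf[OF y])
      show "fst (UNIV, Bf) = fst y" using yU by simp
    next
      fix u v assume u: "u \<in> fst y" and v: "v \<in> fst y"
      show "snd (UNIV, Bf) (u + v) = snd (UNIV, Bf) u + snd (UNIV, Bf) v"
        by (simp, rule eqI) (simp add: Bf cinner_add_left psesq_add_left[OF PU])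
      show "snd y u v = cinner (snd (UNIV, Bf) u) v" by (simp add: Bf)
    next
      fix c u assume u: "u \<in> fst y"
      have "cinner (Bf (c *\<^sub>C u)) v = cinner (c *\<^sub>C Bf u) v" for v
        using PU by (simp add: Bf cinner_scaleC_left psesq_def)
      then show "snd (UNIV, Bf) (c *\<^sub>C u) = c *\<^sub>C snd (UNIV, Bf) u" by (simp add: eqI)
    next
      fix u assume "u \<notin> fst y" then show "snd (UNIV, Bf) u = 0" using yU by simp
    qed
    then show ?thesis using frm_Gf by metis
  qed
qed

lemma oplus_f_comm: "oplus_f x y = oplus_f y x"
  by (auto simp: oplus_f_def form_add_comm)

lemma subGf: "sub_gea (Gf :: 'a::chilbert form set) Vf oplus_f zero_form"
  unfolding sub_gea_def
proof (intro conjI ballI impI)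
  show "gea (Vf :: 'a form set) oplus_f zero_form" by (rule gea_Vf)
  show "(Gf :: 'a form set) \<subseteq> Vf" by (rule Gf_sub)
  show "zero_form \<in> (Gf :: 'a form set)" using frm_Gf[OF zero_op_V] by (simp add: frm_zero)
next
  fix x y w :: "'a form"
  assume x: "x \<in> Vf" and y: "y \<in> Vf" and w: "w \<in> Vf" and h: "oplus_f x y = Some w"
    and c: "x \<in> Gf \<and> y \<in> Gf \<or> x \<in> Gf \<and> w \<in> Gf \<or> y \<in> Gf \<and> w \<in> Gf"
  have g1: "w \<in> Gf" if gx: "x \<in> Gf" and gy: "y \<in> Gf"
  proof -
    obtain A where A: "A \<in> V" "x = frm A" using Gf_frm[OF gx] by blast
    obtain B where B: "B \<in> V" "y = frm B" using Gf_frm[OF gy] by blast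
    have "map_option frm (oplus_D A B) = Some w" using frm_oplus[OF A(1) B(1)] h A B by simp
    then obtain W where W: "oplus_D A B = Some W" "w = frm W" by auto
    have "W \<in> V" using gea_V A(1) B(1) W(1) unfolding gea_def by blast
    then show ?thesis using W frm_Gf by simp
  qed
  have g2: "b \<in> Gf" if ga: "a \<in> Gf" and gc: "c \<in> Gf" and gb: "b \<in> Vf" and hh: "oplus_f a b = Some c" for a b c :: "'a form"
  proof -
    obtain A where A: "A \<in> V" "a = frm A" using Gf_frm[OF ga] by blast
    obtain C where C: "C \<in> V" "c = frm C" using Gf_frm[OF gc] by blast
    show ?thesis using Gf_diff[OF A(1) C(1) gb] hh A C by simp
  qed
  have hs: "oplus_f y x = Some w" using h oplus_f_comm by metis
  have all: "x \<in> Gf \<and> y \<in> Gf \<and> w \<in> Gf"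
    using c g1 g2[OF _ _ y h] g2[OF _ _ x hs] by blast
  then show "x \<in> Gf" "y \<in> Gf" "w \<in> Gf" by auto
qed

theorem theorem4p14:
  assumes "infinite_dimensional TYPE('a::chilbert)"
  shows "sub_gea (Gf :: 'a form set) Vf oplus_f zero_form \<and>
         gea (V :: 'a lop set) oplus_D zero_op \<and>
         gea_isomorphic (Gf :: 'a form set) (restr_op Gf oplus_f) zero_form
                        (V :: 'a lop set) oplus_D zero_op"
  using subGf gea_V iso by blast

end
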